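(* Let $Q$ be a regular $k$-gon centered at the origin, and let $p,q$ be two points in general position with respect to $Q$. Then the breakpoints along the bisector $b_{pq}$ correspond alternatingly to corner placements at $p$ and corner placements at $q$.
   Context: A homothetic placement of $Q$ is $x+\lambda Q$ ($\lambda>0$, center $x$). $d_Q(x,y)=\min\{\lambda\ge0:y\in x+\lambda Q\}$; the bisector $b_{pq}=\{x:d_Q(x,p)=d_Q(x,q)\}$ is the locus of centers of placements whose boundary contains $p$ and $q$. General position of $p,q$ with respect to $Q$ means the line $pq$ is not parallel to any edge or diagonal of $Q$; then $b_{pq}$ is a polygonal curve whose maximal segments (edgelets) consist of centers of placements in which $p$ and $q$ lie in the relative interiors of two fixed edges. The breakpoints of $b_{pq}$ are the common endpoints of consecutive edgelets; each is the center of a corner placement, i.e. a placement touching $p$ and $q$ in which one of the two points lies at a vertex of the placement (a corner placement at $p$, resp. at $q$, if $p$, resp. $q$, is at the vertex). *)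

theory Defs
  imports "HOL-Analysis.Analysis"
begin

text \<open>The regular k-gon centered at the
origin with first vertex c (c encodes circumradius and rotation) has vertices
vtx k c j = c * cis(2 pi j / k), j = 0..k-1 (indices are periodic mod k).\<close>

definition vtx :: "nat \<Rightarrow> complex \<Rightarrow> nat \<Rightarrow> complex" where
  "vtx k c j = c * cis (2 * pi * real j / real k)"

definition regular_polygon :: "nat \<Rightarrow> complex \<Rightarrow> complex set" where
  "regular_polygon k c = convex hull (vtx k c ` {..<k})"

definition placement :: "complex \<Rightarrow> real \<Rightarrow> complex set \<Rightarrow> complex set" where
  "placement x l S = (\<lambda>z. x + l *\<^sub>R z) ` S"

definition dQ :: "complex set \<Rightarrow> complex \<Rightarrow> complex \<Rightarrow> real" where
  "dQ Q x y = Inf {l. l \<ge> 0 \<and> y \<in> placement x l Q}"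

definition bisector :: "complex set \<Rightarrow> complex \<Rightarrow> complex \<Rightarrow> complex set" where
  "bisector Q p q = {x. dQ Q x p = dQ Q x q}"

text \<open>General position: p \<noteq> q and the line pq is not parallel to any edge or diagonal,
i.e. to the segment between any two distinct vertices.\<close>
definition general_position :: "nat \<Rightarrow> complex \<Rightarrow> complex \<Rightarrow> complex \<Rightarrow> bool" where
  "general_position k c p q \<longleftrightarrow> p \<noteq> q \<and>
     (\<forall>i<k. \<forall>j<k. i \<noteq> j \<longrightarrow> \<not> (\<exists>t::real. q - p = t *\<^sub>R (vtx k c i - vtx k c j)))"

text \<open>Centers of placements touching p and q with p in the relative interior of edge i
and q in the relative interior of edge j (edge i joins vertices i and i+1).\<close>
definition edgelet_set :: "nat \<Rightarrow> complex \<Rightarrow> complex \<Rightarrow> complex \<Rightarrow> nat \<Rightarrow> nat \<Rightarrow> complex set" where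
  "edgelet_set k c p q i j = {x \<in> bisector (regular_polygon k c) p q.
      p \<in> placement x (dQ (regular_polygon k c) x p) (open_segment (vtx k c i) (vtx k c (Suc i))) \<and>
      q \<in> placement x (dQ (regular_polygon k c) x q) (open_segment (vtx k c j) (vtx k c (Suc j)))}"

text \<open>Edgelets: the (nonempty) maximal segments of centers with p, q in the relative
interiors of two fixed edges.\<close>
definition edgelets :: "nat \<Rightarrow> complex \<Rightarrow> complex \<Rightarrow> complex \<Rightarrow> complex set set" where
  "edgelets k c p q = {edgelet_set k c p q i j | i j. i < k \<and> j < k \<and> edgelet_set k c p q i j \<noteq> {}}"

text \<open>Breakpoints: common endpoints of two distinct (hence consecutive) edgelets.\<close>
definition breakpoint :: "nat \<Rightarrow> complex \<Rightarrow> complex \<Rightarrow> complex \<Rightarrow> complex \<Rightarrow> bool" where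
  "breakpoint k c p q x \<longleftrightarrow>
     (\<exists>E1\<in>edgelets k c p q. \<exists>E2\<in>edgelets k c p q. E1 \<noteq> E2 \<and> x \<in> closure E1 \<and> x \<in> closure E2)"

definition corner_at :: "nat \<Rightarrow> complex \<Rightarrow> complex \<Rightarrow> complex \<Rightarrow> complex \<Rightarrow> complex \<Rightarrow> bool" where
  "corner_at k c p q z x \<longleftrightarrow> x \<in> bisector (regular_polygon k c) p q \<and>
     (\<exists>i<k. z = x + dQ (regular_polygon k c) x z *\<^sub>R vtx k c i)"

end

theory Submission
  imports Defs
begin


lemma cos_odd_le:
  fixes n :: int and k :: nat
  assumes k: "k \<ge> 3" and odd: "odd n"
  shows "cos (n * pi / k) \<le> cos (pi / k)"
    and "cos (n * pi / k) = cos (pi / k) \<Longrightarrow> n mod (2*k) = 1 \<or> n mod (2*k) = 2*k - 1"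
proof -
  define r where "r = n mod (2*k)"
  define q where "q = n div (2*k)"
  have kpos: "(k::real) > 0" using k by simp
  have n: "n = 2*k*q + r" unfolding r_def q_def by simp
  have r0: "0 \<le> r" "r < 2*k" unfolding r_def using k by auto
  have rodd: "odd r" using odd n by auto
  have r1: "1 \<le> r" using r0 rodd by (cases "r = 0") auto
  have r2: "r \<le> 2*k - 1" using r0 k by (simp add: of_nat_diff)
  have "n * pi / k = r * pi / k + (2*pi) * real_of_int q"
    using kpos by (simp add: n field_simps)
  hence cn: "cos (n * pi / k) = cos (r * pi / k)"
    by (simp add: cos_add)
  have main: "cos (r * pi / k) \<le> cos (pi / k) \<and> (cos (r * pi / k) = cos (pi / k) \<longrightarrow> r = 1 \<or> r = 2*k-1)"
  proof (cases "r \<le> k")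
    case True
    have a: "0 \<le> r * pi / k" "r * pi / k \<le> pi" using True r1 kpos by (auto simp: field_simps)
    have b: "0 \<le> pi / k" "pi / k \<le> pi" using kpos k by (auto simp: field_simps)
    have le: "pi / k \<le> r * pi / k" using r1 kpos by (simp add: divide_right_mono)
    have "cos (r * pi / k) \<le> cos (pi / k)" using cos_mono_le_eq[OF a b] le by simp
    moreover have "cos (r * pi / k) = cos (pi / k) \<longrightarrow> r = 1"
    proof
      assume e: "cos (r * pi / k) = cos (pi / k)"
      have "\<not> (pi / k < r * pi / k)" using cos_mono_less_eq[OF a b] e by simp
      hence "r * pi / k \<le> pi / k" by simp
      hence "r * pi \<le> pi" using kpos by (simp add: divide_le_cancel)
      hence "r \<le> 1" by simp
      thus "r = 1" using r1 by simp
    qed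
    ultimately show ?thesis by blast
  next
    case False
    define r' where "r' = 2*k - r"
    have r'1: "1 \<le> r'" "r' \<le> k" using r2 False unfolding r'_def by auto
    have cr: "cos (r * pi / k) = cos (r' * pi / k)"
    proof -
      have "r' * pi / k = 2 * pi - r * pi / k" using kpos unfolding r'_def by (simp add: field_simps)
      thus ?thesis by simp
    qed
    have a: "0 \<le> r' * pi / k" "r' * pi / k \<le> pi" using r'1 kpos by (auto simp: field_simps)
    have b: "0 \<le> pi / k" "pi / k \<le> pi" using kpos k by (auto simp: field_simps)
    have le: "pi / k \<le> r' * pi / k" using r'1 kpos by (simp add: divide_right_mono)
    have "cos (r' * pi / k) \<le> cos (pi / k)" using cos_mono_le_eq[OF a b] le by simp
    moreover have "cos (r' * pi / k) = cos (pi / k) \<longrightarrow> r = 2*k-1"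
    proof
      assume e: "cos (r' * pi / k) = cos (pi / k)"
      have "\<not> (pi / k < r' * pi / k)" using cos_mono_less_eq[OF a b] e by simp
      hence "r' * pi / k \<le> pi / k" by simp
      hence "r' * pi \<le> pi" using kpos by (simp add: divide_le_cancel)
      hence "r' \<le> 1" by simp
      thus "r = 2*k-1" using r'1 unfolding r'_def by simp
    qed
    ultimately show ?thesis using cr by auto
  qed
  show "cos (n * pi / k) \<le> cos (pi / k)" using main cn by simp
  show "cos (n * pi / k) = cos (pi / k) \<Longrightarrow> n mod (2*k) = 1 \<or> n mod (2*k) = 2*k - 1"
    using main cn unfolding r_def by simp
qed


locale rp = fixes k :: nat and c :: complex assumes k3: "3 \<le> k" and c0: "c \<noteq> 0"
begin

abbreviation v where "v \<equiv> vtx k c"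
definition nn :: "nat \<Rightarrow> complex" where "nn m = c * cis ((2*m+1)*pi/k)"
definition f :: "nat \<Rightarrow> complex \<Rightarrow> real" where "f m w = Re (w * cnj (nn m))"
definition h :: real where "h = (cmod c)^2 * cos (pi/k)"

lemma kpos: "real k > 0" using k3 by simp

lemma h_pos: "h > 0"
proof -
  have "pi / k \<le> pi / 3" using k3 by (intro divide_left_mono) auto
  also have "\<dots> < pi / 2" by simp
  finally have "cos (pi / k) > 0" using kpos by (intro cos_gt_zero) (auto intro: divide_pos_pos)
  thus ?thesis unfolding h_def using c0 by simp
qed

lemma f_lin: "f m w = Re w * Re (nn m) + Im w * Im (nn m)"
  unfolding f_def by simp

lemma f_add: "f m (a + b) = f m a + f m b" and f_diff: "f m (a - b) = f m a - f m b"
  and f_scale: "f m (r *\<^sub>R a) = r * f m a" and f_zero: "f m 0 = 0"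
  and f_minus: "f m (- a) = - f m a"
  by (auto simp: f_lin algebra_simps)

lemma continuous_f: "continuous_on S (f m)"
  unfolding f_lin by (intro continuous_intros)

lemma f_v: "f m (v j) = (cmod c)^2 * cos ((2*int j - 2*int m - 1) * pi / k)"
proof -
  have "v j * cnj (nn m) = (c * cnj c) * (cis (2 * pi * real j / real k) * cis (- ((2*m+1)*pi/k)))"
    unfolding vtx_def nn_def by (simp add: cis_cnj algebra_simps)
  also have "\<dots> = complex_of_real ((cmod c)^2) * cis ((2*int j - 2*int m - 1) * pi / k)"
  proof -
    have e1: "c * cnj c = complex_of_real ((cmod c)^2)" by (simp add: complex_norm_square[symmetric])
    have "2 * pi * real j / real k + - ((2*m+1)*pi/k) = (2*int j - 2*int m - 1) * pi / k"
      using kpos by (simp add: field_simps)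
    hence e2: "cis (2 * pi * real j / real k) * cis (- ((2*m+1)*pi/k)) = cis ((2*int j - 2*int m - 1) * pi / k)"
      by (simp add: cis_mult)
    show ?thesis using e1 e2 by simp
  qed
  finally show ?thesis unfolding f_def by (simp add: Re_complex_of_real)
qed

lemma f_v_le: "f m (v j) \<le> h"
proof -
  have "odd (2*int j - 2*int m - 1)" by simp
  from cos_odd_le(1)[OF k3 this] show ?thesis unfolding f_v h_def
    by (intro mult_left_mono) auto
qed

lemma f_v_eq: assumes "f m (v j) = h" shows "j mod k = m mod k \<or> j mod k = Suc m mod k"
proof -
  have o: "odd (2*int j - 2*int m - 1)" by simp
  have "cos ((2*int j - 2*int m - 1) * pi / k) = cos (pi / k)"
    using assms c0 unfolding f_v h_def by simp
  from cos_odd_le(2)[OF k3 o this]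
  have "(2*int j - 2*int m - 1) mod int (2*k) = 1 \<or> (2*int j - 2*int m - 1) mod int (2*k) = int (2*k - 1)" .
  thus ?thesis
  proof
    assume a: "(2*int j - 2*int m - 1) mod int (2*k) = 1"
    have "1 mod int (2*k) = 1" using k3 by simp
    with a have "(2*int j - 2*int m - 1) mod int (2*k) = 1 mod int (2*k)" by simp
    hence "int (2*k) dvd (2*int j - 2*int m - 1) - 1" by (metis mod_eq_dvd_iff)
    hence "2 * int k dvd 2 * (int j - int (Suc m))" by (simp add: algebra_simps)
    hence "int k dvd int j - int (Suc m)" by (metis dvd_times_left_cancel_iff zero_neq_numeral)
    hence "int j mod int k = int (Suc m) mod int k" by (simp add: mod_eq_dvd_iff)
    hence "int (j mod k) = int (Suc m mod k)" by (simp only: zmod_int)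
    hence "j mod k = Suc m mod k" by (simp only: of_nat_eq_iff)
    thus ?thesis by simp
  next
    assume a: "(2*int j - 2*int m - 1) mod int (2*k) = int (2*k - 1)"
    have "(-1) mod int (2*k) = int (2*k - 1)" using k3 by (simp add: zmod_minus1 of_nat_diff)
    with a have "(2*int j - 2*int m - 1) mod int (2*k) = (-1) mod int (2*k)" by simp
    hence "int (2*k) dvd (2*int j - 2*int m - 1) - (-1)" by (metis mod_eq_dvd_iff)
    hence "2 * int k dvd 2 * (int j - int m)" by (simp add: algebra_simps)
    hence "int k dvd int j - int m" by (metis dvd_times_left_cancel_iff zero_neq_numeral)
    hence "int j mod int k = int m mod int k" by (simp add: mod_eq_dvd_iff)
    hence "int (j mod k) = int (m mod k)" by (simp only: zmod_int)
    hence "j mod k = m mod k" by (simp only: of_nat_eq_iff)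
    thus ?thesis by simp
  qed
qed

lemma v_mod: "v (j mod k) = v j"
proof -
  obtain q where j: "j = k * q + j mod k" by (metis div_mult_mod_eq mult.commute)
  have "2 * pi * real j / real k = 2 * pi * real (j mod k) / real k + 2 * pi * real q"
    using kpos by (subst j) (simp add: field_simps)
  hence "cis (2 * pi * real j / real k) = cis (2 * pi * real (j mod k) / real k) * cis (2 * pi * real q)"
    by (metis cis_mult)
  also have "cis (2 * pi * real q) = 1" by (rule cis_multiple_2pi) simp
  finally show ?thesis unfolding vtx_def by simp
qed

lemma v_eq_mod: "i mod k = j mod k \<Longrightarrow> v i = v j"
  by (metis v_mod)

lemma mod_facts:
  shows "Suc (Suc i) mod k \<noteq> i mod k" and "Suc i mod k \<noteq> i mod k"
proof -
  show "Suc (Suc i) mod k \<noteq> i mod k"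
  proof
    assume "Suc (Suc i) mod k = i mod k"
    hence "k dvd Suc (Suc i) - i" by (simp add: mod_eq_dvd_iff_nat)
    hence "k dvd 2" by simp
    thus False using k3 by (auto dest: dvd_imp_le)
  qed
  show "Suc i mod k \<noteq> i mod k"
  proof
    assume "Suc i mod k = i mod k"
    hence "k dvd Suc i - i" by (simp add: mod_eq_dvd_iff_nat)
    hence "k dvd 1" by simp
    thus False using k3 by auto
  qed
qed

lemma f_v_self: "f m (v m) = h" "f m (v (Suc m)) = h"
  unfolding f_v h_def by (simp_all add: algebra_simps)

end

context rp begin

lemma cis_identity: "complex_of_real (sin A) * cis \<phi> = complex_of_real (sin (A - \<phi>)) + complex_of_real (sin \<phi>) * cis A"
  by (simp add: complex_eq_iff sin_diff cis.sel algebra_simps)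

lemma sector:
  assumes w: "w \<noteq> 0"
  shows "\<exists>m<k. \<exists>\<alpha> \<beta>. \<alpha> \<ge> 0 \<and> \<beta> \<ge> 0 \<and> w = \<alpha> *\<^sub>R v m + \<beta> *\<^sub>R v (Suc m)"
proof -
  define z where "z = w / c"
  have z0: "z \<noteq> 0" using w c0 unfolding z_def by simp
  define \<theta> where "\<theta> = Arg z"
  have tb: "-pi < \<theta>" "\<theta> \<le> pi" unfolding \<theta>_def using Arg_bounded by auto
  have zr: "z = complex_of_real (cmod z) * cis \<theta>" unfolding \<theta>_def using rcis_cmod_Arg[of z] by (simp add: rcis_def)
  define \<theta>' where "\<theta>' = (if \<theta> < 0 then \<theta> + 2*pi else \<theta>)"
  have t'b: "0 \<le> \<theta>'" "\<theta>' < 2*pi" unfolding \<theta>'_def using tb by auto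
  have ct: "cis \<theta>' = cis \<theta>" unfolding \<theta>'_def by (simp add: cis_mult[symmetric])
  define m where "m = nat \<lfloor>\<theta>' * k / (2*pi)\<rfloor>"
  have fl0: "0 \<le> \<lfloor>\<theta>' * k / (2*pi)\<rfloor>" using t'b kpos by simp
  have mle: "real m \<le> \<theta>' * k / (2*pi)" unfolding m_def using fl0
    by (metis of_int_floor_le of_nat_nat of_int_of_nat_eq)
  have mgt: "\<theta>' * k / (2*pi) < real m + 1" unfolding m_def using fl0
    by (metis of_nat_nat of_int_of_nat_eq real_of_int_floor_add_one_gt)
  have "\<theta>' * k / (2*pi) < k" using t'b kpos by (simp add: field_simps)
  hence mk: "m < k" using mle mgt by linarith
  define A where "A = 2*pi/k"
  define \<phi> where "\<phi> = \<theta>' - 2*pi*m/k"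
  have phi0: "0 \<le> \<phi>" unfolding \<phi>_def using mle kpos by (simp add: field_simps)
  have "\<theta>' * k < 2*pi*(m+1)" using mgt by (simp add: field_simps)
  hence "\<theta>' < 2*pi*(m+1)/k" using kpos by (simp add: field_simps)
  hence phiA: "\<phi> < A" unfolding \<phi>_def A_def by (simp add: field_simps add_divide_distrib)
  have Api: "A < pi" unfolding A_def using k3 kpos by (simp add: field_simps)
  have Apos: "0 < A" unfolding A_def using kpos by simp
  have sA: "sin A > 0" using Apos Api by (intro sin_gt_zero)
  have sphi: "sin \<phi> \<ge> 0" using phi0 phiA Api by (intro sin_ge_zero) auto
  have sAphi: "sin (A - \<phi>) \<ge> 0" using phi0 phiA Api by (intro sin_ge_zero) auto
  have vm: "v m = c * cis (2*pi*m/k)" unfolding vtx_def by simp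
  have vSm: "v (Suc m) = c * cis (2*pi*m/k) * cis A"
  proof -
    have "2 * pi * real (Suc m) / real k = 2*pi*m/k + A" unfolding A_def using kpos by (simp add: field_simps)
    thus ?thesis unfolding vtx_def by (simp add: cis_mult)
  qed
  have ct2: "cis \<theta>' = cis (2*pi*m/k) * cis \<phi>" unfolding \<phi>_def by (simp add: cis_mult)
  define \<alpha> where "\<alpha> = cmod z * sin (A - \<phi>) / sin A"
  define \<beta> where "\<beta> = cmod z * sin \<phi> / sin A"
  have "w = c * z" unfolding z_def using c0 by simp
  also have "\<dots> = complex_of_real (cmod z) * (c * cis (2*pi*m/k)) * cis \<phi>"
  proof -
    have "z = complex_of_real (cmod z) * (cis (2*pi*m/k) * cis \<phi>)" using zr ct ct2 by simp
    thus ?thesis by (simp add: algebra_simps)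
  qed
  also have "cis \<phi> = (complex_of_real (sin (A - \<phi>)) + complex_of_real (sin \<phi>) * cis A) / complex_of_real (sin A)"
    using cis_identity[of A \<phi>] sA by (simp add: field_simps)
  finally have "w = \<alpha> *\<^sub>R v m + \<beta> *\<^sub>R v (Suc m)"
    unfolding vm vSm \<alpha>_def \<beta>_def scaleR_conv_of_real using sA by (simp add: field_simps)
  moreover have "\<alpha> \<ge> 0" "\<beta> \<ge> 0" unfolding \<alpha>_def \<beta>_def using sA sphi sAphi by auto
  ultimately show ?thesis using mk by blast
qed

end


lemma continuous_on_Max_fam:
  fixes F :: "'i \<Rightarrow> 'a::topological_space \<Rightarrow> real"
  assumes "finite I" "I \<noteq> {}" "\<And>i. i \<in> I \<Longrightarrow> continuous_on S (F i)"
  shows "continuous_on S (\<lambda>x. Max ((\<lambda>i. F i x) ` I))"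
  using assms
proof (induction I rule: finite_ne_induct)
  case (singleton x)
  then show ?case by simp
next
  case (insert x F')
  have "continuous_on S (\<lambda>y. max (F x y) (Max ((\<lambda>i. F i y) ` F')))"
    using insert by (intro continuous_intros) auto
  thus ?case using insert by (simp add: Max_insert)
qed

context rp begin

lemma kne: "{..<k} \<noteq> {}"
proof -
  have "0 \<in> {..<k}" using k3 by simp
  thus ?thesis by blast
qed

definition G :: "complex \<Rightarrow> real" where "G w = Max ((\<lambda>m. f m w) ` {..<k}) / h"

lemma G_ge: "m < k \<Longrightarrow> f m w \<le> G w * h"
  unfolding G_def using h_pos by (auto intro: Max_ge)

lemma G_attained: "\<exists>m<k. f m w = G w * h"
proof -
  have "Max ((\<lambda>m. f m w) ` {..<k}) \<in> (\<lambda>m. f m w) ` {..<k}"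
    using kne by (intro Max_in) auto
  thus ?thesis unfolding G_def using h_pos by auto
qed

lemma continuous_G: "continuous_on S G"
  unfolding G_def using kne h_pos
  by (intro continuous_intros continuous_on_Max_fam continuous_f) auto

lemma f_comb: "f m' (\<alpha> *\<^sub>R v m + \<beta> *\<^sub>R v (Suc m)) = \<alpha> * f m' (v m) + \<beta> * f m' (v (Suc m))"
  by (simp add: f_add f_scale)

lemma G_sector:
  assumes "m < k" "\<alpha> \<ge> 0" "\<beta> \<ge> 0" "w = \<alpha> *\<^sub>R v m + \<beta> *\<^sub>R v (Suc m)"
  shows "G w = \<alpha> + \<beta>"
proof -
  have le: "f m' w \<le> (\<alpha> + \<beta>) * h" for m'
  proof -
    have "\<alpha> * f m' (v m) \<le> \<alpha> * h" using assms f_v_le by (intro mult_left_mono) auto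
    moreover have "\<beta> * f m' (v (Suc m)) \<le> \<beta> * h" using assms f_v_le by (intro mult_left_mono) auto
    ultimately show ?thesis unfolding assms(4) f_comb by (simp add: algebra_simps)
  qed
  have eq: "f m w = (\<alpha> + \<beta>) * h" unfolding assms(4) f_comb f_v_self by (simp add: algebra_simps)
  obtain m' where m': "m' < k" "f m' w = G w * h" using G_attained by blast
  have "G w * h \<le> (\<alpha> + \<beta>) * h" using le[of m'] m' by simp
  moreover have "(\<alpha> + \<beta>) * h \<le> G w * h" using G_ge[OF assms(1), of w] eq by simp
  ultimately show ?thesis using h_pos by simp
qed

lemma G_zero: "G 0 = 0"
  using G_sector[of 0 0 0 0] k3 by simp

lemma G_pos: "w \<noteq> 0 \<Longrightarrow> G w > 0"
proof -
  assume w: "w \<noteq> 0"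
  then obtain m \<alpha> \<beta> where s: "m < k" "\<alpha> \<ge> 0" "\<beta> \<ge> 0" "w = \<alpha> *\<^sub>R v m + \<beta> *\<^sub>R v (Suc m)"
    using sector by blast
  have "\<alpha> + \<beta> \<noteq> 0"
  proof
    assume "\<alpha> + \<beta> = 0"
    hence "\<alpha> = 0" "\<beta> = 0" using s by linarith+
    thus False using w s by simp
  qed
  thus ?thesis using G_sector[OF s] s by simp
qed

lemma G_eq0_iff: "G w = 0 \<longleftrightarrow> w = 0"
  using G_pos G_zero by fastforce

lemma G_scale: assumes "r \<ge> 0" shows "G (r *\<^sub>R w) = r * G w"
proof (cases "w = 0 \<or> r = 0")
  case True thus ?thesis using G_zero by auto
next
  case False
  then obtain m \<alpha> \<beta> where s: "m < k" "\<alpha> \<ge> 0" "\<beta> \<ge> 0" "w = \<alpha> *\<^sub>R v m + \<beta> *\<^sub>R v (Suc m)"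
    using sector by blast
  have "r *\<^sub>R w = (r*\<alpha>) *\<^sub>R v m + (r*\<beta>) *\<^sub>R v (Suc m)" using s by (simp add: algebra_simps)
  hence "G (r *\<^sub>R w) = r*\<alpha> + r*\<beta>" using s assms by (intro G_sector) auto
  thus ?thesis using G_sector[OF s] by (simp add: algebra_simps)
qed

abbreviation Q where "Q \<equiv> regular_polygon k c"

lemma Q_sub: "w \<in> Q \<Longrightarrow> m < k \<Longrightarrow> f m w \<le> h"
proof -
  assume w: "w \<in> Q" and m: "m < k"
  have "Q \<subseteq> {w. f m w \<le> h}" unfolding regular_polygon_def
  proof (rule hull_minimal)
    show "v ` {..<k} \<subseteq> {w. f m w \<le> h}" using f_v_le by auto
    have "{w. f m w \<le> h} = {w. inner (nn m) w \<le> h}" by (auto simp: f_lin inner_complex_def algebra_simps)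
    thus "convex {w. f m w \<le> h}" using convex_halfspace_le by simp
  qed
  thus ?thesis using w by auto
qed

lemma v_in_Q: "v j \<in> Q"
proof -
  have "v (j mod k) \<in> v ` {..<k}" using k3 by auto
  thus ?thesis unfolding regular_polygon_def v_mod by (rule hull_inc)
qed

lemma edge_in_Q: "closed_segment (v j) (v (Suc j)) \<subseteq> Q"
  unfolding regular_polygon_def
  by (rule closed_segment_subset) (auto intro: v_in_Q[unfolded regular_polygon_def] convex_convex_hull)

lemma Q_ne: "Q \<noteq> {}" using v_in_Q by auto

lemma dQ_eq: "dQ Q x y = G (y - x)"
proof (cases "y = x")
  case True
  have "Inf {l. l \<ge> 0 \<and> y \<in> placement x l Q} = 0"
  proof (rule cInf_eq_minimum)
    show "0 \<in> {l. l \<ge> 0 \<and> y \<in> placement x l Q}" using True Q_ne unfolding placement_def by auto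
  qed auto
  thus ?thesis using True G_zero unfolding dQ_def by simp
next
  case False
  define w where "w = y - x"
  have w0: "w \<noteq> 0" using False unfolding w_def by simp
  obtain m \<alpha> \<beta> where s: "m < k" "\<alpha> \<ge> 0" "\<beta> \<ge> 0" "w = \<alpha> *\<^sub>R v m + \<beta> *\<^sub>R v (Suc m)"
    using sector[OF w0] by blast
  have Gw: "G w = \<alpha> + \<beta>" using G_sector[OF s] .
  have Gp: "G w > 0" using G_pos[OF w0] .
  have "Inf {l. l \<ge> 0 \<and> y \<in> placement x l Q} = G w"
  proof (rule cInf_eq_minimum)
    have "(1 / G w) *\<^sub>R w \<in> closed_segment (v m) (v (Suc m))"
      unfolding in_segment
    proof (intro exI[of _ "\<beta> / G w"] conjI)
      show "0 \<le> \<beta> / G w" "\<beta> / G w \<le> 1" using s Gw Gp by auto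
      show "(1 / G w) *\<^sub>R w = (1 - \<beta> / G w) *\<^sub>R v m + (\<beta> / G w) *\<^sub>R v (Suc m)"
      proof -
        have e: "1 - \<beta> / G w = \<alpha> / G w" using Gw Gp by (simp add: field_simps)
        show ?thesis unfolding e using s(4) by (simp add: scaleR_add_right)
      qed
    qed
    hence mem: "(1 / G w) *\<^sub>R w \<in> Q" using edge_in_Q by auto
    have "y = x + G w *\<^sub>R ((1 / G w) *\<^sub>R w)" using Gp unfolding w_def by simp
    hence "y \<in> (\<lambda>z. x + G w *\<^sub>R z) ` Q" by (rule image_eqI[OF _ mem])
    thus "G w \<in> {l. l \<ge> 0 \<and> y \<in> placement x l Q}" using Gp unfolding placement_def by auto
  next
    fix l assume "l \<in> {l. l \<ge> 0 \<and> y \<in> placement x l Q}"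
    then obtain u where l: "l \<ge> 0" "u \<in> Q" "y = x + l *\<^sub>R u" unfolding placement_def by auto
    have wl: "w = l *\<^sub>R u" using l unfolding w_def by simp
    have "l \<noteq> 0" using wl w0 by auto
    obtain m' where m': "m' < k" "f m' w = G w * h" using G_attained by blast
    have "G w * h = l * f m' u" using m' wl f_scale by simp
    also have "\<dots> \<le> l * h" using Q_sub[OF l(2) m'(1)] l by (intro mult_left_mono) auto
    finally show "G w \<le> l" using h_pos by simp
  qed
  thus ?thesis unfolding dQ_def w_def .
qed

end

context rp begin

lemma modSuc: "a mod k = b mod k \<Longrightarrow> Suc a mod k = Suc b mod k"
  by (metis mod_Suc_eq)

lemma d_eq: "v (Suc i) - v i = v i * (cis (2*pi/k) - 1)"
proof -
  have "2 * pi * real (Suc i) / real k = 2 * pi * real i / real k + 2*pi/k" using kpos by (simp add: field_simps)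
  hence "cis (2 * pi * real (Suc i) / real k) = cis (2 * pi * real i / real k) * cis (2*pi/k)"
    by (metis cis_mult)
  thus ?thesis unfolding vtx_def by (simp add: algebra_simps)
qed

lemma norm_v: "cmod (v i) = cmod c" unfolding vtx_def by (simp add: norm_mult)

lemma cis_ne1: "cis (2*pi/k) \<noteq> 1"
proof
  assume "cis (2*pi/k) = 1"
  hence "cos (2*pi/k) = 1" by (metis cis.sel(1) one_complex.sel(1))
  moreover have "cos (2*pi/k) < 1"
  proof -
    have "cos (2*pi/k) < cos 0"
      using kpos k3 by (subst cos_mono_less_eq) (auto simp: field_simps)
    thus ?thesis by simp
  qed
  ultimately show False by simp
qed

lemma d_norm: "cmod (v (Suc i) - v i) = cmod c * cmod (cis (2*pi/k) - 1)"
  unfolding d_eq by (simp add: norm_mult norm_v)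

lemma d_ne0: "v (Suc i) \<noteq> v i"
proof -
  have "cmod (v (Suc i) - v i) \<noteq> 0" unfolding d_norm using c0 cis_ne1 by simp
  thus ?thesis by auto
qed

lemma closed_edge:
  assumes G1: "G w = 1" and fi: "f i w = h"
  shows "w \<in> closed_segment (v i) (v (Suc i))"
proof -
  have w0: "w \<noteq> 0" using G1 G_zero by auto
  obtain m \<alpha> \<beta> where s: "m < k" "\<alpha> \<ge> 0" "\<beta> \<ge> 0" "w = \<alpha> *\<^sub>R v m + \<beta> *\<^sub>R v (Suc m)"
    using sector[OF w0] by blast
  have ab: "\<alpha> + \<beta> = 1" using G_sector[OF s] G1 by simp
  have fsum: "\<alpha> * f i (v m) + \<beta> * f i (v (Suc m)) = h" using fi s(4) f_comb by simp
  have l1: "\<alpha> * f i (v m) \<le> \<alpha> * h" using s f_v_le by (intro mult_left_mono) auto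
  have l2: "\<beta> * f i (v (Suc m)) \<le> \<beta> * h" using s f_v_le by (intro mult_left_mono) auto
  have A: "f i (v m) = h" if "\<alpha> > 0"
  proof (rule ccontr)
    assume "f i (v m) \<noteq> h"
    hence "f i (v m) < h" using f_v_le[of i m] by simp
    hence "\<alpha> * f i (v m) < \<alpha> * h" using that by simp
    moreover have "\<alpha>*h + \<beta>*h = h" using ab by (metis distrib_right mult_1)
    ultimately show False using fsum l2 by linarith
  qed
  have B: "f i (v (Suc m)) = h" if "\<beta> > 0"
  proof (rule ccontr)
    assume "f i (v (Suc m)) \<noteq> h"
    hence "f i (v (Suc m)) < h" using f_v_le[of i "Suc m"] by simp
    hence "\<beta> * f i (v (Suc m)) < \<beta> * h" using that by simp
    moreover have "\<alpha>*h + \<beta>*h = h" using ab by (metis distrib_right mult_1)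
    ultimately show False using fsum l1 by linarith
  qed
  show ?thesis
  proof (cases "\<alpha> > 0 \<and> \<beta> > 0")
    case True
    have m1: "m mod k = i mod k \<or> m mod k = Suc i mod k" using f_v_eq A True by blast
    have m2: "Suc m mod k = i mod k \<or> Suc m mod k = Suc i mod k" using f_v_eq B True by blast
    have "m mod k = i mod k"
    proof (rule ccontr)
      assume "m mod k \<noteq> i mod k"
      hence e: "m mod k = Suc i mod k" using m1 by simp
      hence "Suc m mod k = Suc (Suc i) mod k" by (rule modSuc)
      thus False using m2 mod_facts[of i] mod_facts(2)[of "Suc i"] by auto
    qed
    hence "v m = v i" "v (Suc m) = v (Suc i)" by (rule v_eq_mod, rule v_eq_mod[OF modSuc])
    moreover have "\<alpha> = 1 - \<beta>" using ab by simp
    ultimately have "w = (1 - \<beta>) *\<^sub>R v i + \<beta> *\<^sub>R v (Suc i)" using s(4) by simp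
    thus ?thesis unfolding in_segment using s ab by auto
  next
    case False
    hence "\<alpha> = 0 \<or> \<beta> = 0" using s by auto
    thus ?thesis
    proof
      assume a0: "\<alpha> = 0"
      hence b1: "\<beta> = 1" using ab by simp
      hence "Suc m mod k = i mod k \<or> Suc m mod k = Suc i mod k" using f_v_eq B by auto
      hence "v (Suc m) = v i \<or> v (Suc m) = v (Suc i)" using v_eq_mod by blast
      hence "w = v i \<or> w = v (Suc i)" using s a0 b1 by auto
      thus ?thesis by auto
    next
      assume b0: "\<beta> = 0"
      hence a1: "\<alpha> = 1" using ab by simp
      hence "m mod k = i mod k \<or> m mod k = Suc i mod k" using f_v_eq A by auto
      hence "v m = v i \<or> v m = v (Suc i)" using v_eq_mod by blast
      hence "w = v i \<or> w = v (Suc i)" using s b0 a1 by auto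
      thus ?thesis by auto
    qed
  qed
qed

lemma open_edge_unique:
  assumes "0 < s" "s < 1" "f m ((1 - s) *\<^sub>R v i + s *\<^sub>R v (Suc i)) = h"
  shows "i mod k = m mod k"
proof -
  have e: "(1 - s) * f m (v i) + s * f m (v (Suc i)) = h" using assms(3) by (simp add: f_add f_scale)
  have l1: "(1-s) * f m (v i) \<le> (1-s) * h" using assms f_v_le by (intro mult_left_mono) auto
  have l2: "s * f m (v (Suc i)) \<le> s * h" using assms f_v_le by (intro mult_left_mono) auto
  have "f m (v i) = h"
  proof (rule ccontr)
    assume "f m (v i) \<noteq> h"
    hence "f m (v i) < h" using f_v_le[of m i] by simp
    hence "(1-s) * f m (v i) < (1-s) * h" using assms by simp
    moreover have "(1-s)*h + s*h = h" by (simp add: algebra_simps)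
    ultimately show False using e l2 by linarith
  qed
  moreover have "f m (v (Suc i)) = h"
  proof (rule ccontr)
    assume "f m (v (Suc i)) \<noteq> h"
    hence "f m (v (Suc i)) < h" using f_v_le[of m "Suc i"] by simp
    hence "s * f m (v (Suc i)) < s * h" using assms by simp
    moreover have "(1-s)*h + s*h = h" by (simp add: algebra_simps)
    ultimately show False using e l1 by linarith
  qed
  ultimately have m1: "i mod k = m mod k \<or> i mod k = Suc m mod k"
    and m2: "Suc i mod k = m mod k \<or> Suc i mod k = Suc m mod k" using f_v_eq by auto
  show ?thesis
  proof (rule ccontr)
    assume "i mod k \<noteq> m mod k"
    hence "i mod k = Suc m mod k" using m1 by simp
    hence "Suc i mod k = Suc (Suc m) mod k" by (rule modSuc)
    thus False using m2 mod_facts[of m] mod_facts(2)[of "Suc m"] by auto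
  qed
qed

lemma closed_edge_vertex:
  assumes "w \<in> closed_segment (v i) (v (Suc i))" "f m w = h" "i mod k \<noteq> m mod k"
  shows "w = v i \<or> w = v (Suc i)"
proof -
  obtain s where s: "0 \<le> s" "s \<le> 1" "w = (1 - s) *\<^sub>R v i + s *\<^sub>R v (Suc i)"
    using assms(1) unfolding in_segment by auto
  have "\<not> (0 < s \<and> s < 1)"
  proof
    assume "0 < s \<and> s < 1"
    hence "i mod k = m mod k" using open_edge_unique[of s m i] assms(2) s(3) by auto
    thus False using assms(3) by simp
  qed
  hence "s = 0 \<or> s = 1" using s by auto
  thus ?thesis using s by auto
qed

lemma edge_f: assumes "w \<in> closed_segment (v i) (v (Suc i))" shows "f i w = h"
proof -
  obtain u where "w = (1 - u) *\<^sub>R v i + u *\<^sub>R v (Suc i)" using assms unfolding in_segment by auto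
  hence "f i w = (1-u) * h + u * h" by (simp add: f_add f_scale f_v_self)
  thus ?thesis by (simp add: algebra_simps)
qed

end


locale rpq = rp + fixes p q :: complex assumes gp: "general_position k c p q"
begin

abbreviation B where "B \<equiv> bisector Q p q"

lemma pq: "p \<noteq> q" using gp unfolding general_position_def by simp

lemma gp': assumes "a mod k \<noteq> b mod k" shows "q - p \<noteq> t *\<^sub>R (v a - v b)"
proof
  assume e: "q - p = t *\<^sub>R (v a - v b)"
  have "a mod k < k" "b mod k < k" using k3 by auto
  with gp assms have "\<not> (\<exists>t::real. q - p = t *\<^sub>R (v (a mod k) - v (b mod k)))"
    unfolding general_position_def by blast
  thus False using e v_mod by auto
qed

lemma gp_edge: "q - p \<noteq> t *\<^sub>R (v (Suc j) - v j)"
  using gp' mod_facts(2) by blast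

lemma B_iff: "x \<in> B \<longleftrightarrow> G (p - x) = G (q - x)"
  unfolding bisector_def dQ_eq by simp

definition K :: "nat \<Rightarrow> nat \<Rightarrow> complex set" where
  "K i j = {x. G (p - x) = G (q - x) \<and> f i (p - x) = G (p - x) * h \<and> f j (q - x) = G (q - x) * h}"

lemma K_closed: "closed (K i j)"
proof -
  have c1: "continuous_on UNIV (\<lambda>x. G (p - x))" "continuous_on UNIV (\<lambda>x. G (q - x))"
    by (rule continuous_on_compose2[OF continuous_G[of UNIV]], auto intro!: continuous_intros)+
  have c2: "continuous_on UNIV (\<lambda>x. f i (p - x))" "continuous_on UNIV (\<lambda>x. f j (q - x))"
    by (rule continuous_on_compose2[OF continuous_f[of UNIV]], auto intro!: continuous_intros)+
  show ?thesis unfolding K_def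
    by (intro closed_Collect_conj closed_Collect_eq continuous_intros c1 c2)
qed

lemma lam_pos: "x \<in> B \<Longrightarrow> G (p - x) > 0"
proof -
  assume x: "x \<in> B"
  have "G (p - x) \<noteq> 0"
  proof
    assume a: "G (p - x) = 0"
    hence "G (q - x) = 0" using x B_iff by simp
    hence "p - x = 0" "q - x = 0" using a G_eq0_iff by auto
    hence "p = x" "q = x" by auto
    thus False using pq by simp
  qed
  moreover have "G (p - x) \<ge> 0" using G_pos G_zero by (cases "p - x = 0") (auto simp: less_imp_le)
  ultimately show ?thesis by simp
qed

lemma corner_p_iff: "corner_at k c p q p x \<longleftrightarrow> x \<in> B \<and> (\<exists>a<k. p = x + G (p - x) *\<^sub>R v a)"
  unfolding corner_at_def dQ_eq by simp

lemma corner_q_iff: "corner_at k c p q q x \<longleftrightarrow> x \<in> B \<and> (\<exists>a<k. q = x + G (p - x) *\<^sub>R v a)"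
  unfolding corner_at_def dQ_eq using B_iff by auto

lemma edgelet_iff: "x \<in> edgelet_set k c p q i j \<longleftrightarrow> x \<in> B \<and>
   (\<exists>u\<in>open_segment (v i) (v (Suc i)). p = x + G (p - x) *\<^sub>R u) \<and>
   (\<exists>u\<in>open_segment (v j) (v (Suc j)). q = x + G (p - x) *\<^sub>R u)"
  unfolding edgelet_set_def dQ_eq placement_def using B_iff by auto

lemma not_both: "\<not> (corner_at k c p q p x \<and> corner_at k c p q q x)"
proof
  assume "corner_at k c p q p x \<and> corner_at k c p q q x"
  then obtain a b where ab: "a < k" "b < k" "p = x + G (p - x) *\<^sub>R v a" "q = x + G (p - x) *\<^sub>R v b"
    unfolding corner_p_iff corner_q_iff by blast
  have "a \<noteq> b" using ab pq by auto
  hence "b mod k \<noteq> a mod k" using ab by simp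
  hence "q - p \<noteq> G (p - x) *\<^sub>R (v b - v a)" by (rule gp')
  moreover have "q - p = G (p - x) *\<^sub>R (v b - v a)" using ab(3,4) by (simp add: algebra_simps)
  ultimately show False by simp
qed

lemma edgelet_K: "edgelet_set k c p q i j \<subseteq> K i j"
proof
  fix x assume "x \<in> edgelet_set k c p q i j"
  then obtain u u' where x: "x \<in> B" "u \<in> open_segment (v i) (v (Suc i))" "p = x + G (p - x) *\<^sub>R u"
    "u' \<in> open_segment (v j) (v (Suc j))" "q = x + G (p - x) *\<^sub>R u'"
    unfolding edgelet_iff by blast
  have "f i u = h" using x(2) edge_f open_closed_segment by blast
  moreover have "f j u' = h" using x(4) edge_f open_closed_segment by blast
  moreover have "p - x = G (p - x) *\<^sub>R u" using x(3) by (metis add_diff_cancel_left')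
  moreover have "q - x = G (p - x) *\<^sub>R u'" using x(5) by (metis add_diff_cancel_left')
  ultimately show "x \<in> K i j" unfolding K_def using x(1) B_iff
    by (simp add: f_scale) (metis f_scale mult.commute)
qed

lemma closure_edgelet_K: "closure (edgelet_set k c p q i j) \<subseteq> K i j"
  using edgelet_K K_closed by (rule closure_minimal)

definition Wp where "Wp x = (1 / G (p - x)) *\<^sub>R (p - x)"
definition Wq where "Wq x = (1 / G (p - x)) *\<^sub>R (q - x)"

lemma K_B: "x \<in> K i j \<Longrightarrow> x \<in> B" unfolding K_def B_iff by simp

lemma Wp_eq: "x \<in> B \<Longrightarrow> p = x + G (p - x) *\<^sub>R Wp x"
  unfolding Wp_def using lam_pos[of x] by simp
lemma Wq_eq: "x \<in> B \<Longrightarrow> q = x + G (p - x) *\<^sub>R Wq x"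
  unfolding Wq_def using lam_pos[of x] by simp

lemma G_Wp: "x \<in> B \<Longrightarrow> G (Wp x) = 1"
  unfolding Wp_def using lam_pos[of x] by (subst G_scale) auto
lemma G_Wq: "x \<in> B \<Longrightarrow> G (Wq x) = 1"
  unfolding Wq_def using lam_pos[of x] B_iff by (subst G_scale) auto

lemma f_Wp: "x \<in> B \<Longrightarrow> f m (Wp x) = h \<longleftrightarrow> f m (p - x) = G (p - x) * h"
  unfolding Wp_def f_scale using lam_pos[of x] by (auto simp: field_simps)
lemma f_Wq: "x \<in> B \<Longrightarrow> f m (Wq x) = h \<longleftrightarrow> f m (q - x) = G (q - x) * h"
  unfolding Wq_def f_scale using lam_pos[of x] B_iff by (auto simp: field_simps)

lemma K_edges: assumes "x \<in> K i j"
  shows "Wp x \<in> closed_segment (v i) (v (Suc i))" "Wq x \<in> closed_segment (v j) (v (Suc j))"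
proof -
  have x: "x \<in> B" using K_B assms .
  show "Wp x \<in> closed_segment (v i) (v (Suc i))"
    using assms x by (intro closed_edge G_Wp) (auto simp: K_def f_Wp)
  show "Wq x \<in> closed_segment (v j) (v (Suc j))"
    using assms x by (intro closed_edge G_Wq) (auto simp: K_def f_Wq)
qed

lemma vertex_corner_p: assumes "x \<in> B" "Wp x = v a" shows "corner_at k c p q p x"
  unfolding corner_p_iff using assms Wp_eq[OF assms(1)] v_mod[of a] k3
  by (intro conjI exI[of _ "a mod k"]) auto

lemma vertex_corner_q: assumes "x \<in> B" "Wq x = v a" shows "corner_at k c p q q x"
  unfolding corner_q_iff using assms Wq_eq[OF assms(1)] v_mod[of a] k3
  by (intro conjI exI[of _ "a mod k"]) auto

lemma part1:
  assumes "breakpoint k c p q x"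
  shows "corner_at k c p q p x \<noteq> corner_at k c p q q x"
proof -
  obtain i1 j1 i2 j2 where ij: "i1 < k" "j1 < k" "i2 < k" "j2 < k"
    "edgelet_set k c p q i1 j1 \<noteq> edgelet_set k c p q i2 j2"
    "x \<in> closure (edgelet_set k c p q i1 j1)" "x \<in> closure (edgelet_set k c p q i2 j2)"
    using assms unfolding breakpoint_def edgelets_def by blast
  have K1: "x \<in> K i1 j1" and K2: "x \<in> K i2 j2" using ij closure_edgelet_K by blast+
  have x: "x \<in> B" using K_B K1 .
  have "corner_at k c p q p x \<or> corner_at k c p q q x"
  proof (cases "i1 = i2")
    case False
    have "Wp x = v i1 \<or> Wp x = v (Suc i1)"
    proof (rule closed_edge_vertex)
      show "Wp x \<in> closed_segment (v i1) (v (Suc i1))" using K_edges(1)[OF K1] .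
      show "f i2 (Wp x) = h" using K2 x by (auto simp: K_def f_Wp)
      show "i1 mod k \<noteq> i2 mod k" using False ij by simp
    qed
    thus ?thesis using vertex_corner_p x by blast
  next
    case True
    hence "j1 \<noteq> j2" using ij by auto
    have "Wq x = v j1 \<or> Wq x = v (Suc j1)"
    proof (rule closed_edge_vertex)
      show "Wq x \<in> closed_segment (v j1) (v (Suc j1))" using K_edges(2)[OF K1] .
      show "f j2 (Wq x) = h" using K2 x by (auto simp: K_def f_Wq)
      show "j1 mod k \<noteq> j2 mod k" using \<open>j1 \<noteq> j2\<close> ij by simp
    qed
    thus ?thesis using vertex_corner_q x by blast
  qed
  thus ?thesis using not_both[of x] by blast
qed

end


lemma subsingleton_finite: assumes "\<And>x y. x \<in> S \<Longrightarrow> y \<in> S \<Longrightarrow> x = y" shows "finite S"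
proof (cases "S = {}")
  case False
  then obtain x where "x \<in> S" by blast
  hence "S \<subseteq> {x}" using assms by blast
  thus ?thesis by (rule finite_subset) simp
qed simp

lemma diff_lemma: fixes p :: "'a::real_vector" shows "p = x + l *\<^sub>R a \<Longrightarrow> q = x + l *\<^sub>R b \<Longrightarrow> q - p = l *\<^sub>R (b - a)"
  by (simp add: algebra_simps)

lemma diff_lemma1: fixes p :: "'a::real_vector" shows "p = x + l *\<^sub>R a \<Longrightarrow> p - x = l *\<^sub>R a"
  by simp

context rpq begin

lemma seg_form: "w \<in> closed_segment a b \<Longrightarrow> \<exists>t. 0 \<le> t \<and> t \<le> 1 \<and> w = a + t *\<^sub>R (b - a)"
  unfolding in_segment by (auto simp: algebra_simps)

lemma uniq_gen:
  fixes A D u :: complex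
  assumes "l > 0" "m > 0" "u = l *\<^sub>R (A + t *\<^sub>R D)" "u = m *\<^sub>R (A + t' *\<^sub>R D)"
    "\<And>r. u \<noteq> r *\<^sub>R D" "D \<noteq> 0"
  shows "l = m \<and> t = t'"
proof -
  have e: "(l - m) *\<^sub>R A = (m * t' - l * t) *\<^sub>R D" using assms(3,4) by (simp add: algebra_simps)
  have lm: "l = m"
  proof (rule ccontr)
    assume "l \<noteq> m"
    hence "A = (1 / (l - m)) *\<^sub>R ((l - m) *\<^sub>R A)" by simp
    also have "\<dots> = ((m * t' - l * t) / (l - m)) *\<^sub>R D" unfolding e by simp
    finally have "A = ((m * t' - l * t) / (l - m)) *\<^sub>R D" .
    hence "u = (l * ((m * t' - l * t) / (l - m) + t)) *\<^sub>R D" using assms(3) by (simp add: algebra_simps)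
    thus False using assms(5) by blast
  qed
  hence "(l * t) *\<^sub>R D = (l * t') *\<^sub>R D" using e by (simp add: algebra_simps)
  hence "l * t = l * t'" using assms(6) by simp
  thus ?thesis using lm assms(1) by simp
qed

lemma corner_p_W: "corner_at k c p q p x \<Longrightarrow> \<exists>a<k. Wp x = v a"
proof -
  assume "corner_at k c p q p x"
  then obtain a where a: "x \<in> B" "a < k" "p = x + G (p - x) *\<^sub>R v a" unfolding corner_p_iff by blast
  have "p - x = G (p - x) *\<^sub>R v a" using a(3) by (rule diff_lemma1)
  hence "Wp x = (1 / G (p - x)) *\<^sub>R (G (p - x) *\<^sub>R v a)" unfolding Wp_def by metis
  hence "Wp x = v a" using lam_pos[OF a(1)] by simp
  thus ?thesis using a by blast
qed

lemma corner_q_W: "corner_at k c p q q x \<Longrightarrow> \<exists>a<k. Wq x = v a"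
proof -
  assume "corner_at k c p q q x"
  then obtain a where a: "x \<in> B" "a < k" "q = x + G (p - x) *\<^sub>R v a" unfolding corner_q_iff by blast
  have "q - x = G (p - x) *\<^sub>R v a" using a(3) by (rule diff_lemma1)
  hence "Wq x = (1 / G (p - x)) *\<^sub>R (G (p - x) *\<^sub>R v a)" unfolding Wq_def by metis
  hence "Wq x = v a" using lam_pos[OF a(1)] by simp
  thus ?thesis using a by blast
qed

lemma B_edge_p: "x \<in> B \<Longrightarrow> \<exists>i<k. Wp x \<in> closed_segment (v i) (v (Suc i))"
proof -
  assume x: "x \<in> B"
  obtain i where "i < k" "f i (Wp x) = G (Wp x) * h" using G_attained by blast
  thus ?thesis using G_Wp[OF x] closed_edge by auto
qed

lemma B_edge_q: "x \<in> B \<Longrightarrow> \<exists>i<k. Wq x \<in> closed_segment (v i) (v (Suc i))"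
proof -
  assume x: "x \<in> B"
  obtain i where "i < k" "f i (Wq x) = G (Wq x) * h" using G_attained by blast
  thus ?thesis using G_Wq[OF x] closed_edge by auto
qed

lemma corner_p_unique:
  assumes "x \<in> B" "y \<in> B" "Wp x = v a" "Wp y = v a"
    "Wq x \<in> closed_segment (v j) (v (Suc j))" "Wq y \<in> closed_segment (v j) (v (Suc j))"
  shows "x = y"
proof -
  obtain t where t: "Wq x = v j + t *\<^sub>R (v (Suc j) - v j)" using seg_form[OF assms(5)] by blast
  obtain t' where t': "Wq y = v j + t' *\<^sub>R (v (Suc j) - v j)" using seg_form[OF assms(6)] by blast
  have ex: "q - p = G (p - x) *\<^sub>R (Wq x - Wp x)" using Wp_eq[OF assms(1)] Wq_eq[OF assms(1)] by (rule diff_lemma)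
  have ey: "q - p = G (p - y) *\<^sub>R (Wq y - Wp y)" using Wp_eq[OF assms(2)] Wq_eq[OF assms(2)] by (rule diff_lemma)
  have "G (p - x) = G (p - y) \<and> t = t'"
  proof (rule uniq_gen[of _ _ "q - p" "v j - v a" t "v (Suc j) - v j" t'])
    show "0 < G (p - x)" "0 < G (p - y)" using lam_pos assms by auto
    show "q - p = G (p - x) *\<^sub>R (v j - v a + t *\<^sub>R (v (Suc j) - v j))" using ex t assms by (simp add: algebra_simps)
    show "q - p = G (p - y) *\<^sub>R (v j - v a + t' *\<^sub>R (v (Suc j) - v j))" using ey t' assms by (simp add: algebra_simps)
    show "\<And>r. q - p \<noteq> r *\<^sub>R (v (Suc j) - v j)" using gp_edge by blast
    show "v (Suc j) - v j \<noteq> 0" using d_ne0 by simp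
  qed
  hence "G (p - x) = G (p - y)" by simp
  moreover have "p - x = G (p - x) *\<^sub>R Wp x" using Wp_eq[OF assms(1)] by (rule diff_lemma1)
  moreover have "p - y = G (p - y) *\<^sub>R Wp y" using Wp_eq[OF assms(2)] by (rule diff_lemma1)
  ultimately have "p - x = p - y" using assms(3,4) by simp
  thus "x = y" by simp
qed

lemma corner_q_unique:
  assumes "x \<in> B" "y \<in> B" "Wq x = v a" "Wq y = v a"
    "Wp x \<in> closed_segment (v j) (v (Suc j))" "Wp y \<in> closed_segment (v j) (v (Suc j))"
  shows "x = y"
proof -
  obtain t where t: "Wp x = v j + t *\<^sub>R (v (Suc j) - v j)" using seg_form[OF assms(5)] by blast
  obtain t' where t': "Wp y = v j + t' *\<^sub>R (v (Suc j) - v j)" using seg_form[OF assms(6)] by blast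
  have ex: "p - q = G (p - x) *\<^sub>R (Wp x - Wq x)" using Wq_eq[OF assms(1)] Wp_eq[OF assms(1)] by (rule diff_lemma)
  have ey: "p - q = G (p - y) *\<^sub>R (Wp y - Wq y)" using Wq_eq[OF assms(2)] Wp_eq[OF assms(2)] by (rule diff_lemma)
  have "G (p - x) = G (p - y) \<and> t = t'"
  proof (rule uniq_gen[of _ _ "p - q" "v j - v a" t "v (Suc j) - v j" t'])
    show "0 < G (p - x)" "0 < G (p - y)" using lam_pos assms by auto
    show "p - q = G (p - x) *\<^sub>R (v j - v a + t *\<^sub>R (v (Suc j) - v j))" using ex t assms by (simp add: algebra_simps)
    show "p - q = G (p - y) *\<^sub>R (v j - v a + t' *\<^sub>R (v (Suc j) - v j))" using ey t' assms by (simp add: algebra_simps)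
    show "\<And>r. p - q \<noteq> r *\<^sub>R (v (Suc j) - v j)"
    proof
      fix r assume "p - q = r *\<^sub>R (v (Suc j) - v j)"
      hence "q - p = (-r) *\<^sub>R (v (Suc j) - v j)" by (simp add: algebra_simps)
      thus False using gp_edge by blast
    qed
    show "v (Suc j) - v j \<noteq> 0" using d_ne0 by simp
  qed
  hence "G (p - x) = G (p - y)" by simp
  moreover have "q - x = G (p - x) *\<^sub>R Wq x" using Wq_eq[OF assms(1)] by (rule diff_lemma1)
  moreover have "q - y = G (p - y) *\<^sub>R Wq y" using Wq_eq[OF assms(2)] by (rule diff_lemma1)
  ultimately have "q - x = q - y" using assms(3,4) by simp
  thus "x = y" by simp
qed

definition Cset where "Cset = {x. corner_at k c p q p x \<or> corner_at k c p q q x}"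

lemma finite_Cset: "finite Cset"
proof -
  have "Cset \<subseteq> (\<Union>a\<in>{..<k}. \<Union>j\<in>{..<k}. {x. x \<in> B \<and> Wp x = v a \<and> Wq x \<in> closed_segment (v j) (v (Suc j))})
     \<union> (\<Union>a\<in>{..<k}. \<Union>j\<in>{..<k}. {x. x \<in> B \<and> Wq x = v a \<and> Wp x \<in> closed_segment (v j) (v (Suc j))})" (is "_ \<subseteq> ?R")
  proof
    fix x assume "x \<in> Cset"
    hence "corner_at k c p q p x \<or> corner_at k c p q q x" unfolding Cset_def by simp
    thus "x \<in> ?R"
    proof
      assume h: "corner_at k c p q p x"
      hence x: "x \<in> B" unfolding corner_p_iff by simp
      obtain a where "a < k" "Wp x = v a" using corner_p_W[OF h] by blast
      moreover obtain j where "j < k" "Wq x \<in> closed_segment (v j) (v (Suc j))" using B_edge_q[OF x] by blast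
      ultimately show ?thesis using x by blast
    next
      assume h: "corner_at k c p q q x"
      hence x: "x \<in> B" unfolding corner_q_iff by simp
      obtain a where "a < k" "Wq x = v a" using corner_q_W[OF h] by blast
      moreover obtain j where "j < k" "Wp x \<in> closed_segment (v j) (v (Suc j))" using B_edge_p[OF x] by blast
      ultimately show ?thesis using x by blast
    qed
  qed
  moreover have "finite ?R"
    by (intro finite_UnI finite_UN_I finite_lessThan subsingleton_finite)
       (auto intro: corner_p_unique corner_q_unique)
  ultimately show ?thesis by (rule finite_subset)
qed

end

context rpq begin

lemma K_noncorner:
  assumes x: "x \<in> K i j" and np: "\<not> corner_at k c p q p x" and nq: "\<not> corner_at k c p q q x"
  shows "x \<in> edgelet_set k c p q i j"
proof -
  have xB: "x \<in> B" using K_B x .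
  have "Wp x \<in> open_segment (v i) (v (Suc i))"
    unfolding open_segment_def using K_edges(1)[OF x] vertex_corner_p[OF xB] np by auto
  moreover have "Wq x \<in> open_segment (v j) (v (Suc j))"
    unfolding open_segment_def using K_edges(2)[OF x] vertex_corner_q[OF xB] nq by auto
  ultimately show ?thesis unfolding edgelet_iff using xB Wp_eq[OF xB] Wq_eq[OF xB] by blast
qed

lemma B_K: assumes x: "x \<in> B" shows "\<exists>i<k. \<exists>j<k. x \<in> K i j"
proof -
  obtain i where i: "i < k" "f i (Wp x) = G (Wp x) * h" using G_attained by blast
  obtain j where j: "j < k" "f j (Wq x) = G (Wq x) * h" using G_attained by blast
  have "f i (p - x) = G (p - x) * h" using i G_Wp[OF x] f_Wp[OF x] by simp
  moreover have "f j (q - x) = G (q - x) * h" using j G_Wq[OF x] f_Wq[OF x] by simp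
  ultimately show ?thesis using x i j B_iff unfolding K_def by blast
qed

lemma open_seg_form: "w \<in> open_segment a b \<Longrightarrow> \<exists>s. 0 < s \<and> s < 1 \<and> w = (1 - s) *\<^sub>R a + s *\<^sub>R b"
  unfolding in_segment by auto

lemma strict_p:
  assumes x: "x \<in> K i0 j0" and np: "\<not> corner_at k c p q p x" and nq: "\<not> corner_at k c p q q x"
    and "i0 < k" "m < k" "m \<noteq> i0"
  shows "f m (p - x) < G (p - x) * h"
proof -
  have xB: "x \<in> B" using K_B x .
  have "x \<in> edgelet_set k c p q i0 j0" using K_noncorner assms by blast
  then obtain u where u: "u \<in> open_segment (v i0) (v (Suc i0))" "p = x + G (p - x) *\<^sub>R u"
    unfolding edgelet_iff by blast
  have "p - x = G (p - x) *\<^sub>R u" using u(2) by (rule diff_lemma1)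
  hence "Wp x = (1 / G (p - x)) *\<^sub>R (G (p - x) *\<^sub>R u)" unfolding Wp_def by metis
  hence uW: "u = Wp x" using lam_pos[OF xB] by simp
  obtain s where s: "0 < s" "s < 1" "u = (1 - s) *\<^sub>R v i0 + s *\<^sub>R v (Suc i0)" using open_seg_form[OF u(1)] by blast
  have "f m u \<noteq> h"
  proof
    assume "f m u = h"
    hence "i0 mod k = m mod k" using open_edge_unique s by blast
    thus False using assms by simp
  qed
  moreover have "f m u \<le> h" using G_ge[OF assms(5), of u] G_Wp[OF xB] uW by simp
  ultimately have "f m u < h" by simp
  moreover have "p - x = G (p - x) *\<^sub>R u" using u(2) by (rule diff_lemma1)
  hence "f m (p - x) = G (p - x) * f m u" by (metis f_scale)
  ultimately show ?thesis using lam_pos[OF xB] by simp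
qed

lemma strict_q:
  assumes x: "x \<in> K i0 j0" and np: "\<not> corner_at k c p q p x" and nq: "\<not> corner_at k c p q q x"
    and "j0 < k" "m < k" "m \<noteq> j0"
  shows "f m (q - x) < G (q - x) * h"
proof -
  have xB: "x \<in> B" using K_B x .
  have "x \<in> edgelet_set k c p q i0 j0" using K_noncorner assms by blast
  then obtain u where u: "u \<in> open_segment (v j0) (v (Suc j0))" "q = x + G (p - x) *\<^sub>R u"
    unfolding edgelet_iff by blast
  have "q - x = G (p - x) *\<^sub>R u" using u(2) by (rule diff_lemma1)
  hence "Wq x = (1 / G (p - x)) *\<^sub>R (G (p - x) *\<^sub>R u)" unfolding Wq_def by metis
  hence uW: "u = Wq x" using lam_pos[OF xB] by simp
  obtain s where s: "0 < s" "s < 1" "u = (1 - s) *\<^sub>R v j0 + s *\<^sub>R v (Suc j0)" using open_seg_form[OF u(1)] by blast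
  have "f m u \<noteq> h"
  proof
    assume "f m u = h"
    hence "j0 mod k = m mod k" using open_edge_unique s by blast
    thus False using assms by simp
  qed
  moreover have "f m u \<le> h" using G_ge[OF assms(5), of u] G_Wq[OF xB] uW by simp
  ultimately have "f m u < h" by simp
  moreover have "q - x = G (p - x) *\<^sub>R u" using u(2) by (rule diff_lemma1)
  hence "f m (q - x) = G (p - x) * f m u" by (metis f_scale)
  ultimately show ?thesis using lam_pos[OF xB] B_iff xB by simp
qed

end

context rpq begin

lemma cont_comp_G: "continuous_on S g \<Longrightarrow> continuous_on S (\<lambda>t. G (a - g t))"
  by (rule continuous_on_compose2[OF continuous_G[of UNIV]]) (auto intro!: continuous_intros)

lemma cont_comp_f: "continuous_on S g \<Longrightarrow> continuous_on S (\<lambda>t. f m (a - g t))"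
  by (rule continuous_on_compose2[OF continuous_f[of UNIV]]) (auto intro!: continuous_intros)

lemma constancy:
  fixes \<gamma> :: "real \<Rightarrow> complex"
  assumes cont: "continuous_on {0..1} \<gamma>" and img: "\<gamma> ` {0..1} \<subseteq> B"
    and ab: "0 \<le> a" "a < b" "b \<le> 1" and nc: "\<And>t. t \<in> {a<..<b} \<Longrightarrow> \<gamma> t \<notin> Cset"
  shows "\<exists>i<k. \<exists>j<k. \<forall>t\<in>{a<..<b}. \<gamma> t \<in> edgelet_set k c p q i j"
proof -
  define I where "I = {a<..<b}"
  have IB: "\<gamma> t \<in> B" if "t \<in> I" for t using that img ab unfolding I_def by auto
  have Inc: "\<not> corner_at k c p q p (\<gamma> t) \<and> \<not> corner_at k c p q q (\<gamma> t)" if "t \<in> I" for t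
    using nc that unfolding I_def Cset_def by auto
  have contI: "continuous_on I \<gamma>" using ab unfolding I_def
    by (intro continuous_on_subset[OF cont]) auto
  define t0 where "t0 = (a + b) / 2"
  have t0I: "t0 \<in> I" unfolding I_def t0_def using ab by auto
  obtain i0 j0 where ij0: "i0 < k" "j0 < k" "\<gamma> t0 \<in> K i0 j0" using B_K[OF IB[OF t0I]] by blast
  define S where "S = I \<inter> \<gamma> -` K i0 j0"
  have closedS: "closedin (top_of_set I) S" unfolding S_def
    by (rule continuous_closedin_preimage[OF contI K_closed])
  have openS: "openin (top_of_set I) S"
    unfolding openin_euclidean_subtopology_iff
  proof (intro conjI ballI)
    show "S \<subseteq> I" unfolding S_def by auto
    fix t1 assume t1: "t1 \<in> S"
    hence t1I: "t1 \<in> I" and t1K: "\<gamma> t1 \<in> K i0 j0" unfolding S_def by auto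
    define Mi where "Mi = {m. m < k \<and> m \<noteq> i0}"
    define Mj where "Mj = {m. m < k \<and> m \<noteq> j0}"
    have ev1: "eventually (\<lambda>t. \<forall>m\<in>Mi. 0 < G (p - \<gamma> t) * h - f m (p - \<gamma> t)) (at t1 within I)"
    proof (rule eventually_ball_finite)
      show "finite Mi" unfolding Mi_def by auto
      show "\<forall>m\<in>Mi. eventually (\<lambda>t. 0 < G (p - \<gamma> t) * h - f m (p - \<gamma> t)) (at t1 within I)"
      proof
        fix m assume m: "m \<in> Mi"
        have c: "continuous_on I (\<lambda>t. G (p - \<gamma> t) * h - f m (p - \<gamma> t))"
          by (intro continuous_intros cont_comp_G cont_comp_f contI)
        hence lim: "((\<lambda>t. G (p - \<gamma> t) * h - f m (p - \<gamma> t)) \<longlongrightarrow> G (p - \<gamma> t1) * h - f m (p - \<gamma> t1)) (at t1 within I)"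
          using t1I unfolding continuous_on_def by blast
        have "0 < G (p - \<gamma> t1) * h - f m (p - \<gamma> t1)"
          using strict_p[OF t1K] Inc[OF t1I] ij0 m unfolding Mi_def by auto
        from order_tendstoD(1)[OF lim this] show "eventually (\<lambda>t. 0 < G (p - \<gamma> t) * h - f m (p - \<gamma> t)) (at t1 within I)" .
      qed
    qed
    have ev2: "eventually (\<lambda>t. \<forall>m\<in>Mj. 0 < G (q - \<gamma> t) * h - f m (q - \<gamma> t)) (at t1 within I)"
    proof (rule eventually_ball_finite)
      show "finite Mj" unfolding Mj_def by auto
      show "\<forall>m\<in>Mj. eventually (\<lambda>t. 0 < G (q - \<gamma> t) * h - f m (q - \<gamma> t)) (at t1 within I)"
      proof
        fix m assume m: "m \<in> Mj"
        have c: "continuous_on I (\<lambda>t. G (q - \<gamma> t) * h - f m (q - \<gamma> t))"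
          by (intro continuous_intros cont_comp_G cont_comp_f contI)
        hence lim: "((\<lambda>t. G (q - \<gamma> t) * h - f m (q - \<gamma> t)) \<longlongrightarrow> G (q - \<gamma> t1) * h - f m (q - \<gamma> t1)) (at t1 within I)"
          using t1I unfolding continuous_on_def by blast
        have "0 < G (q - \<gamma> t1) * h - f m (q - \<gamma> t1)"
          using strict_q[OF t1K] Inc[OF t1I] ij0 m unfolding Mj_def by auto
        from order_tendstoD(1)[OF lim this] show "eventually (\<lambda>t. 0 < G (q - \<gamma> t) * h - f m (q - \<gamma> t)) (at t1 within I)" .
      qed
    qed
    define P where "P = (\<lambda>t. (\<forall>m\<in>Mi. 0 < G (p - \<gamma> t) * h - f m (p - \<gamma> t)) \<and> (\<forall>m\<in>Mj. 0 < G (q - \<gamma> t) * h - f m (q - \<gamma> t)))"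
    have evP: "eventually P (at t1 within I)" unfolding P_def using eventually_conj[OF ev1 ev2] .
    then obtain d where d: "d > 0" "\<forall>t\<in>I. t \<noteq> t1 \<and> dist t t1 < d \<longrightarrow> P t"
      unfolding eventually_at by blast
    show "\<exists>e>0. \<forall>t'\<in>I. dist t' t1 < e \<longrightarrow> t' \<in> S"
    proof (intro exI[of _ d] conjI ballI impI)
      show "d > 0" by fact
      fix t' assume t': "t' \<in> I" "dist t' t1 < d"
      show "t' \<in> S"
      proof (cases "t' = t1")
        case True thus ?thesis using t1 by simp
      next
        case False
        have P: "(\<forall>m\<in>Mi. 0 < G (p - \<gamma> t') * h - f m (p - \<gamma> t')) \<and> (\<forall>m\<in>Mj. 0 < G (q - \<gamma> t') * h - f m (q - \<gamma> t'))"
          using d(2) t' False unfolding P_def by blast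
        obtain i j where ij: "i < k" "j < k" "\<gamma> t' \<in> K i j" using B_K[OF IB[OF t'(1)]] by blast
        have "i = i0"
        proof (rule ccontr)
          assume "i \<noteq> i0"
          hence "i \<in> Mi" unfolding Mi_def using ij by simp
          hence "0 < G (p - \<gamma> t') * h - f i (p - \<gamma> t')" using P by blast
          moreover have "f i (p - \<gamma> t') = G (p - \<gamma> t') * h" using ij(3) unfolding K_def by blast
          ultimately show False by simp
        qed
        moreover have "j = j0"
        proof (rule ccontr)
          assume "j \<noteq> j0"
          hence "j \<in> Mj" unfolding Mj_def using ij by simp
          hence "0 < G (q - \<gamma> t') * h - f j (q - \<gamma> t')" using P by blast
          moreover have "f j (q - \<gamma> t') = G (q - \<gamma> t') * h" using ij(3) unfolding K_def by blast
          ultimately show False by simp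
        qed
        ultimately show ?thesis using ij t' unfolding S_def by simp
      qed
    qed
  qed
  have conn: "connected I" unfolding I_def by simp
  have "S = {} \<or> S = I"
    using spec[OF conn[unfolded connected_clopen], of S] openS closedS by (meson)
  moreover have "t0 \<in> S" unfolding S_def using t0I ij0 by simp
  ultimately have SI: "S = I" by auto
  show ?thesis
  proof (intro exI conjI ballI)
    show "i0 < k" "j0 < k" by fact+
    fix t assume t: "t \<in> {a<..<b}"
    hence tI: "t \<in> I" unfolding I_def .
    hence "t \<in> S" using SI by simp
    hence "\<gamma> t \<in> K i0 j0" unfolding S_def by simp
    thus "\<gamma> t \<in> edgelet_set k c p q i0 j0"
      by (rule K_noncorner) (use Inc[OF tI] in auto)
  qed
qed

end

context rp begin

lemma f_sym1: "f i (v j) = f j (v (Suc i))"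
proof -
  have e: "real_of_int (2*int (Suc i) - 2*int j - 1) = - real_of_int (2*int j - 2*int i - 1)" by simp
  show ?thesis unfolding f_v e by (simp del: of_int_diff of_int_mult)
qed

lemma f_sym2: "f i (v (Suc j)) = f j (v i)"
proof -
  have e: "real_of_int (2*int (Suc j) - 2*int i - 1) = - real_of_int (2*int i - 2*int j - 1)" by simp
  show ?thesis unfolding f_v e by (simp del: of_int_diff of_int_mult)
qed

lemma both_vertex: assumes "f m (v j) = h" "f m (v (Suc j)) = h" shows "j mod k = m mod k"
proof -
  have m1: "j mod k = m mod k \<or> j mod k = Suc m mod k"
    and m2: "Suc j mod k = m mod k \<or> Suc j mod k = Suc m mod k" using f_v_eq assms by auto
  show ?thesis
  proof (rule ccontr)
    assume "j mod k \<noteq> m mod k"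
    hence "j mod k = Suc m mod k" using m1 by simp
    hence "Suc j mod k = Suc (Suc m) mod k" by (rule modSuc)
    thus False using m2 mod_facts[of m] mod_facts(2)[of "Suc m"] by auto
  qed
qed

lemma f_comb2: "f i (l *\<^sub>R (a + t *\<^sub>R (b - a) - d)) = l * (f i a + t * (f i b - f i a) - f i d)"
  by (simp only: f_add f_diff f_scale)

lemma regular_key:
  assumes ij: "i mod k \<noteq> j mod k" and l: "l > 0" and m: "m > 0"
    and t: "0 < t" "t < 1" and t': "0 < t'" "t' < 1"
    and e: "l *\<^sub>R (v j + t *\<^sub>R (v (Suc j) - v j) - v i) = m *\<^sub>R (v j + t' *\<^sub>R (v (Suc j) - v j) - v (Suc i))"
  shows False
proof -
  define A0 where "A0 = h - f i (v j)"
  define A1 where "A1 = h - f i (v (Suc j))"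
  have A0ge: "A0 \<ge> 0" "A1 \<ge> 0" unfolding A0_def A1_def using f_v_le by auto
  have fj: "f j (v j) = h" "f j (v (Suc j)) = h" "f i (v i) = h" "f i (v (Suc i)) = h" using f_v_self by auto
  have E1: "l * ((1 - t) * A0 + t * A1) = m * ((1 - t') * A0 + t' * A1)"
  proof -
    have "f i (l *\<^sub>R (v j + t *\<^sub>R (v (Suc j) - v j) - v i)) = f i (m *\<^sub>R (v j + t' *\<^sub>R (v (Suc j) - v j) - v (Suc i)))"
      using e by simp
    hence "l * (f i (v j) + t * (f i (v (Suc j)) - f i (v j)) - h) = m * (f i (v j) + t' * (f i (v (Suc j)) - f i (v j)) - h)"
      unfolding f_comb2 fj .
    thus ?thesis unfolding A0_def A1_def by (simp add: algebra_simps)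
  qed
  have E2: "l * A1 = m * A0"
  proof -
    have "f j (l *\<^sub>R (v j + t *\<^sub>R (v (Suc j) - v j) - v i)) = f j (m *\<^sub>R (v j + t' *\<^sub>R (v (Suc j) - v j) - v (Suc i)))"
      using e by simp
    hence "l * (h + t * (h - h) - f j (v i)) = m * (h + t' * (h - h) - f j (v (Suc i)))"
      unfolding f_comb2 fj .
    hence "l * (h - f j (v i)) = m * (h - f j (v (Suc i)))" by simp
    thus ?thesis unfolding A0_def A1_def f_sym1[of i j] f_sym2[of i j] by simp
  qed
  have A0pos: "A0 > 0"
  proof (rule ccontr)
    assume "\<not> A0 > 0"
    hence "A0 = 0" using A0ge by simp
    hence "A1 = 0" using E2 l by simp
    hence "f i (v j) = h" "f i (v (Suc j)) = h" using \<open>A0 = 0\<close> unfolding A0_def A1_def by simp_all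
    hence "j mod k = i mod k" by (rule both_vertex)
    thus False using ij by simp
  qed
  have "l * l * ((1 - t) * A0 + t * A1) = l * m * ((1 - t') * A0 + t' * A1)" using E1 by simp
  hence "l * l * (1 - t) * A0 + t * l * (l * A1) = l * m * (1 - t') * A0 + m * t' * (l * A1)"
    by (simp add: algebra_simps)
  hence "l * l * (1 - t) * A0 + t * l * (m * A0) = l * m * (1 - t') * A0 + m * t' * (m * A0)"
    unfolding E2 .
  hence "(l - m) * (l * (1 - t) + m * t') * A0 = 0" by (simp add: algebra_simps)
  moreover have "l * (1 - t) + m * t' > 0" using l m t t' by (simp add: add_pos_pos)
  ultimately have lm: "l = m" using A0pos by simp
  hence "v j + t *\<^sub>R (v (Suc j) - v j) - v i = v j + t' *\<^sub>R (v (Suc j) - v j) - v (Suc i)"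
    using e l by simp
  hence "(t - t') *\<^sub>R (v (Suc j) - v j) = - (v (Suc i) - v i)" by (simp add: algebra_simps)
  hence "\<bar>t - t'\<bar> * cmod (v (Suc j) - v j) = cmod (v (Suc i) - v i)" by (metis norm_minus_cancel norm_scaleR)
  hence "\<bar>t - t'\<bar> * (cmod c * cmod (cis (2*pi/k) - 1)) = cmod c * cmod (cis (2*pi/k) - 1)"
    unfolding d_norm .
  moreover have "cmod c * cmod (cis (2*pi/k) - 1) \<noteq> 0" using c0 cis_ne1 by simp
  ultimately have "\<bar>t - t'\<bar> = 1" by simp
  thus False using t t' by linarith
qed

end

context rpq begin

lemma same_edge_impossible: assumes "x \<in> K i i" shows False
proof -
  have xB: "x \<in> B" using K_B assms .
  obtain s where s: "Wp x = v i + s *\<^sub>R (v (Suc i) - v i)" using seg_form[OF K_edges(1)[OF assms]] by blast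
  obtain t where t: "Wq x = v i + t *\<^sub>R (v (Suc i) - v i)" using seg_form[OF K_edges(2)[OF assms]] by blast
  have "q - p = G (p - x) *\<^sub>R (Wq x - Wp x)" using Wp_eq[OF xB] Wq_eq[OF xB] by (rule diff_lemma)
  also have "\<dots> = (G (p - x) * (t - s)) *\<^sub>R (v (Suc i) - v i)" unfolding s t by (simp add: algebra_simps)
  finally show False using gp_edge by blast
qed

lemma open_seg_form2: "w \<in> open_segment a b \<Longrightarrow> \<exists>t. 0 < t \<and> t < 1 \<and> w = a + t *\<^sub>R (b - a)"
  unfolding in_segment by (auto simp: algebra_simps)

lemma K_vertex_p: assumes "x \<in> K i j" "corner_at k c p q p x"
  shows "Wp x = v i \<or> Wp x = v (Suc i)"
proof -
  obtain a where a: "a < k" "Wp x = v a" using corner_p_W[OF assms(2)] by blast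
  have "f i (v a) = h" using edge_f[OF K_edges(1)[OF assms(1)]] a by simp
  hence "a mod k = i mod k \<or> a mod k = Suc i mod k" by (rule f_v_eq)
  thus ?thesis using a v_eq_mod by metis
qed

lemma K_vertex_q: assumes "x \<in> K i j" "corner_at k c p q q x"
  shows "Wq x = v j \<or> Wq x = v (Suc j)"
proof -
  obtain a where a: "a < k" "Wq x = v a" using corner_q_W[OF assms(2)] by blast
  have "f j (v a) = h" using edge_f[OF K_edges(2)[OF assms(1)]] a by simp
  hence "a mod k = j mod k \<or> a mod k = Suc j mod k" by (rule f_v_eq)
  thus ?thesis using a v_eq_mod by metis
qed

lemma K_open_q: assumes "x \<in> K i j" "\<not> corner_at k c p q q x"
  shows "Wq x \<in> open_segment (v j) (v (Suc j))"
  unfolding open_segment_def using K_edges(2)[OF assms(1)] vertex_corner_q[OF K_B[OF assms(1)]] assms(2) by auto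

lemma K_open_p: assumes "x \<in> K i j" "\<not> corner_at k c p q p x"
  shows "Wp x \<in> open_segment (v i) (v (Suc i))"
  unfolding open_segment_def using K_edges(1)[OF assms(1)] vertex_corner_p[OF K_B[OF assms(1)]] assms(2) by auto

lemma two_p_corners:
  assumes x: "x \<in> K i j" and y: "y \<in> K i j" and ij: "i < k" "j < k"
    and cx: "corner_at k c p q p x" "\<not> corner_at k c p q q x"
    and cy: "corner_at k c p q p y" "\<not> corner_at k c p q q y"
  shows "x = y"
proof -
  have xB: "x \<in> B" and yB: "y \<in> B" using K_B x y by auto
  have ineq: "i mod k \<noteq> j mod k" using same_edge_impossible x ij by auto
  obtain t where t: "0 < t" "t < 1" "Wq x = v j + t *\<^sub>R (v (Suc j) - v j)" using open_seg_form2[OF K_open_q[OF x cx(2)]] by blast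
  obtain t' where t': "0 < t'" "t' < 1" "Wq y = v j + t' *\<^sub>R (v (Suc j) - v j)" using open_seg_form2[OF K_open_q[OF y cy(2)]] by blast
  have ex: "q - p = G (p - x) *\<^sub>R (Wq x - Wp x)" using Wp_eq[OF xB] Wq_eq[OF xB] by (rule diff_lemma)
  have ey: "q - p = G (p - y) *\<^sub>R (Wq y - Wp y)" using Wp_eq[OF yB] Wq_eq[OF yB] by (rule diff_lemma)
  have lx: "G (p - x) > 0" and ly: "G (p - y) > 0" using lam_pos xB yB by auto
  show ?thesis
  proof (cases "Wp x = Wp y")
    case True
    obtain a where a: "Wp x = v a" using K_vertex_p[OF x cx(1)] by blast
    show ?thesis using corner_p_unique[OF xB yB a _ K_edges(2)[OF x] K_edges(2)[OF y]] a True by simp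
  next
    case False
    have "(Wp x = v i \<and> Wp y = v (Suc i)) \<or> (Wp y = v i \<and> Wp x = v (Suc i))"
      using K_vertex_p[OF x cx(1)] K_vertex_p[OF y cy(1)] False by auto
    thus ?thesis
    proof
      assume a: "Wp x = v i \<and> Wp y = v (Suc i)"
      have "G (p - x) *\<^sub>R (v j + t *\<^sub>R (v (Suc j) - v j) - v i) = G (p - y) *\<^sub>R (v j + t' *\<^sub>R (v (Suc j) - v j) - v (Suc i))"
        using ex ey unfolding conjunct1[OF a] conjunct2[OF a] t(3) t'(3) by simp
      from regular_key[OF ineq lx ly t(1,2) t'(1,2) this] show ?thesis ..
    next
      assume a: "Wp y = v i \<and> Wp x = v (Suc i)"
      have "G (p - y) *\<^sub>R (v j + t' *\<^sub>R (v (Suc j) - v j) - v i) = G (p - x) *\<^sub>R (v j + t *\<^sub>R (v (Suc j) - v j) - v (Suc i))"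
        using ex ey unfolding conjunct1[OF a] conjunct2[OF a] t(3) t'(3) by simp
      from regular_key[OF ineq ly lx t'(1,2) t(1,2) this] show ?thesis ..
    qed
  qed
qed

lemma two_q_corners:
  assumes x: "x \<in> K i j" and y: "y \<in> K i j" and ij: "i < k" "j < k"
    and cx: "corner_at k c p q q x" "\<not> corner_at k c p q p x"
    and cy: "corner_at k c p q q y" "\<not> corner_at k c p q p y"
  shows "x = y"
proof -
  have xB: "x \<in> B" and yB: "y \<in> B" using K_B x y by auto
  have ineq: "j mod k \<noteq> i mod k" using same_edge_impossible x ij by auto
  obtain t where t: "0 < t" "t < 1" "Wp x = v i + t *\<^sub>R (v (Suc i) - v i)" using open_seg_form2[OF K_open_p[OF x cx(2)]] by blast
  obtain t' where t': "0 < t'" "t' < 1" "Wp y = v i + t' *\<^sub>R (v (Suc i) - v i)" using open_seg_form2[OF K_open_p[OF y cy(2)]] by blast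
  have ex: "p - q = G (p - x) *\<^sub>R (Wp x - Wq x)" using Wq_eq[OF xB] Wp_eq[OF xB] by (rule diff_lemma)
  have ey: "p - q = G (p - y) *\<^sub>R (Wp y - Wq y)" using Wq_eq[OF yB] Wp_eq[OF yB] by (rule diff_lemma)
  have lx: "G (p - x) > 0" and ly: "G (p - y) > 0" using lam_pos xB yB by auto
  show ?thesis
  proof (cases "Wq x = Wq y")
    case True
    obtain a where a: "Wq x = v a" using K_vertex_q[OF x cx(1)] by blast
    show ?thesis using corner_q_unique[OF xB yB a _ K_edges(1)[OF x] K_edges(1)[OF y]] a True by simp
  next
    case False
    have "(Wq x = v j \<and> Wq y = v (Suc j)) \<or> (Wq y = v j \<and> Wq x = v (Suc j))"
      using K_vertex_q[OF x cx(1)] K_vertex_q[OF y cy(1)] False by auto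
    thus ?thesis
    proof
      assume a: "Wq x = v j \<and> Wq y = v (Suc j)"
      have "G (p - x) *\<^sub>R (v i + t *\<^sub>R (v (Suc i) - v i) - v j) = G (p - y) *\<^sub>R (v i + t' *\<^sub>R (v (Suc i) - v i) - v (Suc j))"
        using ex ey unfolding conjunct1[OF a] conjunct2[OF a] t(3) t'(3) by simp
      from regular_key[OF ineq lx ly t(1,2) t'(1,2) this] show ?thesis ..
    next
      assume a: "Wq y = v j \<and> Wq x = v (Suc j)"
      have "G (p - y) *\<^sub>R (v i + t' *\<^sub>R (v (Suc i) - v i) - v j) = G (p - x) *\<^sub>R (v i + t *\<^sub>R (v (Suc i) - v i) - v (Suc j))"
        using ex ey unfolding conjunct1[OF a] conjunct2[OF a] t(3) t'(3) by simp
      from regular_key[OF ineq ly lx t'(1,2) t(1,2) this] show ?thesis ..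
    qed
  qed
qed

lemma alternation:
  assumes x: "x \<in> K i j" and y: "y \<in> K i j" and ij: "i < k" "j < k" and xy: "x \<noteq> y"
    and cx: "corner_at k c p q p x \<noteq> corner_at k c p q q x"
    and cy: "corner_at k c p q p y \<noteq> corner_at k c p q q y"
  shows "corner_at k c p q p x \<longleftrightarrow> corner_at k c p q q y"
  using two_p_corners[OF x y ij] two_q_corners[OF x y ij] cx cy xy by blast

end


lemma perp_vec:
  fixes u N :: complex
  assumes "Re (u * cnj N) = 0" "N \<noteq> 0"
  shows "u = (Im (u * cnj N) / (cmod N)^2) *\<^sub>R (\<i> * N)"
proof -
  define a where "a = Re u"
  define b where "b = Im u"
  define n1 where "n1 = Re N"
  define n2 where "n2 = Im N"
  have n: "n1^2 + n2^2 \<noteq> 0" using assms(2) unfolding n1_def n2_def by (simp add: complex_eq_iff sum_power2_eq_zero_iff)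
  have r: "a * n1 + b * n2 = 0" using assms(1) unfolding a_def b_def n1_def n2_def by simp
  have cm: "(cmod N)^2 = n1^2 + n2^2" unfolding n1_def n2_def by (simp add: cmod_power2)
  have im: "Im (u * cnj N) = b * n1 - a * n2" unfolding a_def b_def n1_def n2_def by simp
  have e1: "a * (n1^2 + n2^2) = - ((b * n1 - a * n2) * n2)"
  proof -
    have "a * (n1^2 + n2^2) + (b * n1 - a * n2) * n2 = n1 * (a * n1 + b * n2)" by (simp add: power2_eq_square algebra_simps)
    hence "a * (n1^2 + n2^2) + (b * n1 - a * n2) * n2 = 0" using r by simp
    thus ?thesis by (simp only: eq_neg_iff_add_eq_0)
  qed
  have e2: "b * (n1^2 + n2^2) = (b * n1 - a * n2) * n1"
  proof -
    have "b * (n1^2 + n2^2) - (b * n1 - a * n2) * n1 = n2 * (a * n1 + b * n2)" by (simp add: power2_eq_square algebra_simps)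
    thus ?thesis using r by simp
  qed
  have "a = (b * n1 - a * n2) / (n1^2 + n2^2) * (- n2)" using e1 n by (simp add: field_simps)
  moreover have "b = (b * n1 - a * n2) / (n1^2 + n2^2) * n1" using e2 n by (simp add: field_simps)
  ultimately show ?thesis unfolding im cm
    by (simp add: complex_eq_iff a_def b_def n1_def n2_def)
qed


lemma arc_contra:
  fixes \<gamma> :: "real \<Rightarrow> complex" and E :: "complex set"
  assumes cont: "continuous_on {0..1} \<gamma>" and inj: "inj_on \<gamma> {0..1}"
    and d: "\<delta> > 0" "0 \<le> t0 - \<delta>" "t0 + \<delta> \<le> 1"
    and E\<gamma>: "\<And>t. t \<in> {t0-\<delta><..<t0+\<delta>} \<Longrightarrow> t \<noteq> t0 \<Longrightarrow> \<gamma> t \<in> E"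
    and line: "\<And>x y. x \<in> insert (\<gamma> t0) E \<Longrightarrow> y \<in> insert (\<gamma> t0) E \<Longrightarrow> Re ((x - y) * cnj N) = 0"
    and N: "N \<noteq> 0"
    and \<psi>z: "Im (cnj V * (R - \<gamma> t0)) = 0"
    and sgn: "\<And>w. w \<in> E \<Longrightarrow> \<sigma> * Im (cnj V * (R - w)) > 0"
  shows False
proof -
  define \<psi> where "\<psi> w = \<sigma> * Im (cnj V * (R - w))" for w
  define g where "g = (\<lambda>t. \<psi> (\<gamma> t))"
  have contg: "continuous_on {0..1} g" unfolding g_def \<psi>_def
    by (intro continuous_intros cont)
  have \<psi>0: "\<psi> (\<gamma> t0) = 0" unfolding \<psi>_def using \<psi>z by simp
  have \<psi>lin: "\<psi> x - \<psi> y = \<sigma> * Im (cnj V * (y - x))" for x y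
    unfolding \<psi>_def by (simp add: algebra_simps)
  have injE: "w1 = w2" if w: "w1 \<in> E" "w2 \<in> E" "\<psi> w1 = \<psi> w2" for w1 w2
  proof -
    define D where "D = \<i> * N"
    have "Re ((w1 - w2) * cnj N) = 0" using line w by auto
    hence e1: "w1 - w2 = (Im ((w1 - w2) * cnj N) / (cmod N)^2) *\<^sub>R D" unfolding D_def using perp_vec N by blast
    have "Re ((w1 - \<gamma> t0) * cnj N) = 0" using line w by auto
    hence e2: "w1 - \<gamma> t0 = (Im ((w1 - \<gamma> t0) * cnj N) / (cmod N)^2) *\<^sub>R D" unfolding D_def using perp_vec N by blast
    define r where "r = Im ((w1 - w2) * cnj N) / (cmod N)^2"
    define r1 where "r1 = Im ((w1 - \<gamma> t0) * cnj N) / (cmod N)^2"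
    have "\<psi> w1 - \<psi> (\<gamma> t0) = \<sigma> * Im (cnj V * (- (r1 *\<^sub>R D)))"
      unfolding \<psi>lin using e2 unfolding r1_def by (metis minus_diff_eq)
    hence a: "\<psi> w1 = - (\<sigma> * r1 * Im (cnj V * D))" using \<psi>0 by (simp add: scaleR_conv_of_real algebra_simps)
    have "\<psi> w1 > 0" using sgn w unfolding \<psi>_def by simp
    hence nz: "\<sigma> * Im (cnj V * D) \<noteq> 0" using a by auto
    have "0 = \<psi> w1 - \<psi> w2" using w by simp
    also have "\<dots> = \<sigma> * Im (cnj V * (- (r *\<^sub>R D)))"
      unfolding \<psi>lin using e1 unfolding r_def by (metis minus_diff_eq)
    also have "\<dots> = - r * (\<sigma> * Im (cnj V * D))" by (simp add: scaleR_conv_of_real algebra_simps)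
    finally have "r = 0" using nz by simp
    hence "w1 - w2 = 0" using e1[folded r_def] by simp
    thus ?thesis by simp
  qed
  define t1 where "t1 = t0 - \<delta>/2"
  define t2 where "t2 = t0 + \<delta>/2"
  have t1E: "\<gamma> t1 \<in> E" and t2E: "\<gamma> t2 \<in> E" unfolding t1_def t2_def using d by (auto intro!: E\<gamma>)
  have g1: "g t1 > 0" and g2: "g t2 > 0" using sgn t1E t2E unfolding g_def \<psi>_def by auto
  have g0: "g t0 = 0" unfolding g_def using \<psi>0 .
  have r01: "t1 \<in> {0..1}" "t2 \<in> {0..1}" "t0 \<in> {0..1}" unfolding t1_def t2_def using d by auto
  show False
  proof (cases "g t1 \<le> g t2")
    case True
    have "continuous_on {t0..t2} g" using r01 by (intro continuous_on_subset[OF contg]) (auto simp: t2_def)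
    then obtain t where t: "t0 \<le> t" "t \<le> t2" "g t = g t1"
      using IVT'[of g t0 "g t1" t2] g0 g1 True unfolding t2_def using d by force
    have "t \<noteq> t0" using t g0 g1 by auto
    hence "\<gamma> t \<in> E" using t d unfolding t2_def by (intro E\<gamma>) auto
    hence "\<gamma> t = \<gamma> t1" using injE t1E t(3) unfolding g_def by blast
    moreover have "t \<in> {0..1}" using t r01 d unfolding t2_def by auto
    ultimately have "t = t1" using inj r01 by (auto dest: inj_onD)
    thus False using t d unfolding t1_def by simp
  next
    case False
    have "continuous_on {t1..t0} g" using r01 by (intro continuous_on_subset[OF contg]) (auto simp: t1_def)
    then obtain t where t: "t1 \<le> t" "t \<le> t0" "g t = g t2"
      using IVT2'[of g t0 "g t2" t1] g0 g2 False unfolding t1_def using d by force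
    have "t \<noteq> t0" using t g0 g2 by auto
    hence "\<gamma> t \<in> E" using t d unfolding t1_def by (intro E\<gamma>) auto
    hence "\<gamma> t = \<gamma> t2" using injE t2E t(3) unfolding g_def by blast
    moreover have "t \<in> {0..1}" using t r01 d unfolding t1_def by auto
    ultimately have "t = t2" using inj r01 by (auto dest: inj_onD)
    thus False using t d unfolding t2_def by simp
  qed
qed


context rp begin

lemma X_pos: "Im (cnj (v i) * v (Suc i)) > 0"
proof -
  have vs: "v (Suc i) = v i * cis (2*pi/k)" using d_eq[of i] by (simp add: algebra_simps)
  have "cnj (v i) * v (Suc i) = (v i * cnj (v i)) * cis (2*pi/k)" unfolding vs by (simp add: algebra_simps)
  also have "v i * cnj (v i) = complex_of_real ((cmod c)^2)" using norm_v[of i] by (simp add: complex_norm_square[symmetric])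
  finally have "Im (cnj (v i) * v (Suc i)) = (cmod c)^2 * sin (2*pi/k)" by simp
  moreover have "sin (2*pi/k) > 0" using kpos k3 by (intro sin_gt_zero) (auto simp: field_simps)
  ultimately show ?thesis using c0 by simp
qed

lemma psi_edge:
  assumes "0 < s" "s < 1" "u = (1 - s) *\<^sub>R v i + s *\<^sub>R v (Suc i)"
  shows "Im (cnj (v i) * u) > 0" "Im (cnj (v (Suc i)) * u) < 0"
proof -
  have z1: "Im (cnj (v i) * v i) = 0" "Im (cnj (v (Suc i)) * v (Suc i)) = 0" by simp_all
  have sw: "Im (cnj (v (Suc i)) * v i) = - Im (cnj (v i) * v (Suc i))" by (simp add: algebra_simps)
  have "Im (cnj (v i) * u) = s * Im (cnj (v i) * v (Suc i))"
    unfolding assms(3) by (simp add: algebra_simps scaleR_conv_of_real)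
  thus "Im (cnj (v i) * u) > 0" using X_pos[of i] assms by simp
  have "Im (cnj (v (Suc i)) * u) = - ((1 - s) * Im (cnj (v i) * v (Suc i)))"
    unfolding assms(3) by (simp add: algebra_simps scaleR_conv_of_real)
  thus "Im (cnj (v (Suc i)) * u) < 0" using X_pos[of i] assms by simp
qed

lemma nn_ne: assumes "i mod k \<noteq> j mod k" shows "nn i - nn j \<noteq> 0"
proof
  assume "nn i - nn j = 0"
  hence "f i = f j" unfolding f_def[abs_def] by simp
  hence "f j (v i) = h" "f j (v (Suc i)) = h" using f_v_self[of i] by auto
  hence "i mod k = j mod k" by (rule both_vertex)
  thus False using assms by simp
qed

lemma f_diff_nn: "f i w - f j w = Re (w * cnj (nn i - nn j))"
  unfolding f_def by (simp add: algebra_simps)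

end

context rpq begin

lemma K_line: assumes "x \<in> K i j" "y \<in> K i j" shows "Re ((x - y) * cnj (nn i - nn j)) = 0"
proof -
  have a: "f i (p - x) = f j (q - x)" "f i (p - y) = f j (q - y)" using assms unfolding K_def by auto
  have "f i (x - y) - f j (x - y) = (f i (p - y) - f j (q - y)) - (f i (p - x) - f j (q - x))"
    by (simp add: f_diff)
  also have "\<dots> = 0" using a by simp
  finally show ?thesis unfolding f_diff_nn by simp
qed

lemma psi_sign_p:
  assumes E: "E = edgelet_set k c p q i j" and V: "V = v i \<or> V = v (Suc i)"
  shows "\<exists>\<sigma>::real. \<forall>w\<in>E. \<sigma> * Im (cnj V * (p - w)) > 0"
proof -
  define \<sigma> :: real where "\<sigma> = (if V = v i then 1 else -1)"
  have "\<sigma> * Im (cnj V * (p - w)) > 0" if w: "w \<in> E" for w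
  proof -
    have "w \<in> edgelet_set k c p q i j" using w E by simp
    hence wB: "w \<in> B" and "\<exists>u\<in>open_segment (v i) (v (Suc i)). p = w + G (p - w) *\<^sub>R u"
      using edgelet_iff[of w i j] by simp_all
    then obtain u where u: "u \<in> open_segment (v i) (v (Suc i))" "p = w + G (p - w) *\<^sub>R u" by blast
    obtain s where s: "0 < s" "s < 1" "u = (1 - s) *\<^sub>R v i + s *\<^sub>R v (Suc i)" using open_seg_form[OF u(1)] by blast
    define lam where "lam = G (p - w)"
    have pw: "p - w = lam *\<^sub>R u" using u(2) unfolding lam_def by (rule diff_lemma1)
    have l: "lam > 0" using lam_pos wB unfolding lam_def by simp
    have e: "\<sigma> * Im (cnj V * (p - w)) = lam * (\<sigma> * Im (cnj V * u))" unfolding pw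
      by (simp add: scaleR_conv_of_real algebra_simps)
    have key: "\<sigma> * Im (cnj V * u) > 0"
    proof (cases "V = v i")
      case True thus ?thesis unfolding \<sigma>_def using psi_edge(1)[OF s] by simp
    next
      case False
      hence "V = v (Suc i)" using V by simp
      thus ?thesis unfolding \<sigma>_def using psi_edge(2)[OF s] False by simp
    qed
    show ?thesis unfolding e using l key by (rule mult_pos_pos)
  qed
  thus ?thesis by blast
qed

lemma psi_sign_q:
  assumes E: "E = edgelet_set k c p q i j" and V: "V = v j \<or> V = v (Suc j)"
  shows "\<exists>\<sigma>::real. \<forall>w\<in>E. \<sigma> * Im (cnj V * (q - w)) > 0"
proof -
  define \<sigma> :: real where "\<sigma> = (if V = v j then 1 else -1)"
  have "\<sigma> * Im (cnj V * (q - w)) > 0" if w: "w \<in> E" for w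
  proof -
    have "w \<in> edgelet_set k c p q i j" using w E by simp
    hence wB: "w \<in> B" and "\<exists>u\<in>open_segment (v j) (v (Suc j)). q = w + G (p - w) *\<^sub>R u"
      using edgelet_iff[of w i j] by simp_all
    then obtain u where u: "u \<in> open_segment (v j) (v (Suc j))" "q = w + G (p - w) *\<^sub>R u" by blast
    obtain s where s: "0 < s" "s < 1" "u = (1 - s) *\<^sub>R v j + s *\<^sub>R v (Suc j)" using open_seg_form[OF u(1)] by blast
    define lam where "lam = G (p - w)"
    have pw: "q - w = lam *\<^sub>R u" using u(2) unfolding lam_def by (rule diff_lemma1)
    have l: "lam > 0" using lam_pos wB unfolding lam_def by simp
    have e: "\<sigma> * Im (cnj V * (q - w)) = lam * (\<sigma> * Im (cnj V * u))" unfolding pw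
      by (simp add: scaleR_conv_of_real algebra_simps)
    have key: "\<sigma> * Im (cnj V * u) > 0"
    proof (cases "V = v j")
      case True thus ?thesis unfolding \<sigma>_def using psi_edge(1)[OF s] by simp
    next
      case False
      hence "V = v (Suc j)" using V by simp
      thus ?thesis unfolding \<sigma>_def using psi_edge(2)[OF s] False by simp
    qed
    show ?thesis unfolding e using l key by (rule mult_pos_pos)
  qed
  thus ?thesis by blast
qed

end

context rpq begin

lemma part2:
  fixes \<gamma> :: "real \<Rightarrow> complex"
  assumes bx: "breakpoint k c p q x" and by': "breakpoint k c p q y" and xy: "x \<noteq> y"
    and arc: "arc \<gamma>" and sx: "pathstart \<gamma> = x" and fy: "pathfinish \<gamma> = y"
    and img: "path_image \<gamma> \<subseteq> B" and nb: "\<forall>t\<in>{0<..<1}. \<not> breakpoint k c p q (\<gamma> t)"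
  shows "corner_at k c p q p x \<longleftrightarrow> corner_at k c p q q y"
proof -
  have cont: "continuous_on {0..1} \<gamma>" using arc unfolding arc_def path_def by blast
  have inj: "inj_on \<gamma> {0..1}" using arc unfolding arc_def by blast
  have imgB: "\<gamma> ` {0..1} \<subseteq> B" using img unfolding path_image_def .
  define T where "T = \<gamma> -` Cset \<inter> {0<..<1}"
  have finT: "finite T" unfolding T_def
    by (rule finite_vimage_IntI[OF finite_Cset], rule inj_on_subset[OF inj]) auto
  have clos: "\<gamma> t \<in> closure E" if ab: "a < b" "0 \<le> a" "b \<le> 1" and sE: "\<forall>s\<in>{a<..<b}. \<gamma> s \<in> E"
     and t: "t \<in> {a..b}" for a b t E
  proof -
    have c1: "continuous_on (closure {a<..<b}) \<gamma>" using ab by (auto intro: continuous_on_subset[OF cont])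
    have c2: "\<gamma> ` {a<..<b} \<subseteq> closure E" using sE closure_subset by blast
    have "\<gamma> ` closure {a<..<b} \<subseteq> closure E" by (rule image_closure_subset[OF c1 closed_closure c2])
    thus ?thesis using ab t by auto
  qed
  show ?thesis
  proof (cases "T = {}")
    case True
    have nc: "\<gamma> t \<notin> Cset" if "t \<in> {0<..<1}" for t using True that unfolding T_def by auto
    obtain i j where ij: "i < k" "j < k" "\<forall>t\<in>{0<..<1}. \<gamma> t \<in> edgelet_set k c p q i j"
      using constancy[OF cont imgB, where a = 0 and b = 1] nc by auto
    have "x \<in> closure (edgelet_set k c p q i j)"
      using clos[of 0 1 "edgelet_set k c p q i j" 0] ij sx unfolding pathstart_def by simp
    hence xK: "x \<in> K i j" using closure_edgelet_K by blast
    have "y \<in> closure (edgelet_set k c p q i j)"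
      using clos[of 0 1 "edgelet_set k c p q i j" 1] ij fy unfolding pathfinish_def by simp
    hence yK: "y \<in> K i j" using closure_edgelet_K by blast
    show ?thesis using alternation[OF xK yK ij(1,2) xy part1[OF bx] part1[OF by']] .
  next
    case False
    then obtain t0 where t0: "t0 \<in> T" by blast
    hence t0I: "0 < t0" "t0 < 1" and zC: "\<gamma> t0 \<in> Cset" unfolding T_def by auto
    obtain d0 where d0: "d0 > 0" "\<forall>t\<in>T. t \<noteq> t0 \<longrightarrow> d0 \<le> dist t0 t" using finite_set_avoid[OF finT, of t0] by blast
    define \<delta> where "\<delta> = min d0 (min t0 (1 - t0))"
    have \<delta>: "\<delta> > 0" "0 \<le> t0 - \<delta>" "t0 + \<delta> \<le> 1" "\<delta> \<le> d0" using d0 t0I unfolding \<delta>_def by auto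
    have ncorner: "\<gamma> t \<notin> Cset" if tt: "t \<in> {t0-\<delta><..<t0+\<delta>}" "t \<noteq> t0" for t
    proof
      assume "\<gamma> t \<in> Cset"
      moreover have "t \<in> {0<..<1}" using tt \<delta> by auto
      ultimately have "t \<in> T" unfolding T_def by simp
      hence "d0 \<le> dist t0 t" using d0 tt(2) by auto
      moreover have "dist t0 t < \<delta>" using tt by (auto simp: dist_real_def)
      ultimately show False using \<delta> by simp
    qed
    have nc1: "\<gamma> t \<notin> Cset" if "t \<in> {t0-\<delta><..<t0}" for t using ncorner that by auto
    have nc2: "\<gamma> t \<notin> Cset" if "t \<in> {t0<..<t0+\<delta>}" for t using ncorner that by auto
    obtain i1 j1 where ij1: "i1 < k" "j1 < k" "\<forall>t\<in>{t0-\<delta><..<t0}. \<gamma> t \<in> edgelet_set k c p q i1 j1"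
      using constancy[OF cont imgB, where a = "t0-\<delta>" and b = t0] \<delta> t0I nc1 by auto
    obtain i2 j2 where ij2: "i2 < k" "j2 < k" "\<forall>t\<in>{t0<..<t0+\<delta>}. \<gamma> t \<in> edgelet_set k c p q i2 j2"
      using constancy[OF cont imgB, where a = t0 and b = "t0+\<delta>"] \<delta> t0I nc2 by auto
    define E where "E = edgelet_set k c p q i1 j1"
    define E2 where "E2 = edgelet_set k c p q i2 j2"
    have zE: "\<gamma> t0 \<in> closure E" using clos[of "t0-\<delta>" t0 E t0] ij1 \<delta> t0I unfolding E_def by auto
    have zE2: "\<gamma> t0 \<in> closure E2" using clos[of t0 "t0+\<delta>" E2 t0] ij2 \<delta> t0I unfolding E2_def by auto
    have "\<gamma> (t0 - \<delta>/2) \<in> E" using ij1 \<delta> unfolding E_def by auto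
    hence Ein: "E \<in> edgelets k c p q" unfolding edgelets_def E_def using ij1 by blast
    have "\<gamma> (t0 + \<delta>/2) \<in> E2" using ij2 \<delta> unfolding E2_def by auto
    hence E2in: "E2 \<in> edgelets k c p q" unfolding edgelets_def E2_def using ij2 by blast
    have "\<not> breakpoint k c p q (\<gamma> t0)" using nb t0I by auto
    hence EE: "E = E2" using Ein E2in zE zE2 unfolding breakpoint_def by blast
    have E\<gamma>: "\<gamma> t \<in> E" if tt: "t \<in> {t0-\<delta><..<t0+\<delta>}" "t \<noteq> t0" for t
    proof (cases "t < t0")
      case True thus ?thesis using tt ij1 unfolding E_def by auto
    next
      case False thus ?thesis using tt ij2 EE unfolding E2_def by auto
    qed
    have zK: "\<gamma> t0 \<in> K i1 j1" using zE closure_edgelet_K unfolding E_def by blast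
    have zB: "\<gamma> t0 \<in> B" using K_B zK .
    have ij1ne: "i1 mod k \<noteq> j1 mod k"
    proof
      assume "i1 mod k = j1 mod k"
      hence "i1 = j1" using ij1 by simp
      thus False using same_edge_impossible zK by simp
    qed
    define N where "N = nn i1 - nn j1"
    have N: "N \<noteq> 0" unfolding N_def using nn_ne ij1ne .
    have EK: "insert (\<gamma> t0) E \<subseteq> K i1 j1" using zK edgelet_K unfolding E_def by blast
    have line: "Re ((a - b) * cnj N) = 0" if "a \<in> insert (\<gamma> t0) E" "b \<in> insert (\<gamma> t0) E" for a b
      unfolding N_def using K_line that EK by blast
    define lam where "lam = G (p - \<gamma> t0)"
    have "corner_at k c p q p (\<gamma> t0) \<or> corner_at k c p q q (\<gamma> t0)" using zC unfolding Cset_def by simp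
    hence False
    proof
      assume cp: "corner_at k c p q p (\<gamma> t0)"
      define V where "V = Wp (\<gamma> t0)"
      have V: "V = v i1 \<or> V = v (Suc i1)" unfolding V_def using K_vertex_p[OF zK cp] .
      obtain \<sigma> where \<sigma>: "\<forall>w\<in>E. \<sigma> * Im (cnj V * (p - w)) > 0" using psi_sign_p[OF E_def V] by blast
      have pz: "p - \<gamma> t0 = lam *\<^sub>R V" unfolding V_def lam_def using Wp_eq[OF zB] by (rule diff_lemma1)
      have \<psi>z: "Im (cnj V * (p - \<gamma> t0)) = 0" unfolding pz by (simp add: scaleR_conv_of_real algebra_simps)
      show False using arc_contra[OF cont inj \<delta>(1,2,3) E\<gamma> line N \<psi>z] \<sigma> by blast
    next
      assume cq: "corner_at k c p q q (\<gamma> t0)"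
      define V where "V = Wq (\<gamma> t0)"
      have V: "V = v j1 \<or> V = v (Suc j1)" unfolding V_def using K_vertex_q[OF zK cq] .
      obtain \<sigma> where \<sigma>: "\<forall>w\<in>E. \<sigma> * Im (cnj V * (q - w)) > 0" using psi_sign_q[OF E_def V] by blast
      have pz: "q - \<gamma> t0 = lam *\<^sub>R V" unfolding V_def lam_def using Wq_eq[OF zB] by (rule diff_lemma1)
      have \<psi>z: "Im (cnj V * (q - \<gamma> t0)) = 0" unfolding pz by (simp add: scaleR_conv_of_real algebra_simps)
      show False using arc_contra[OF cont inj \<delta>(1,2,3) E\<gamma> line N \<psi>z] \<sigma> by blast
    qed
    thus ?thesis ..
  qed
qed

end

theorem lemma5:
  fixes k :: nat and c p q :: complex
  assumes "k \<ge> 3" and "c \<noteq> 0" and "general_position k c p q"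
  shows "(\<forall>x. breakpoint k c p q x \<longrightarrow> (corner_at k c p q p x \<noteq> corner_at k c p q q x))
     \<and> (\<forall>x y \<gamma>. breakpoint k c p q x \<and> breakpoint k c p q y \<and> x \<noteq> y
           \<and> arc \<gamma> \<and> pathstart \<gamma> = x \<and> pathfinish \<gamma> = y
           \<and> path_image \<gamma> \<subseteq> bisector (regular_polygon k c) p q
           \<and> (\<forall>t\<in>{0<..<1}. \<not> breakpoint k c p q (\<gamma> t))
         \<longrightarrow> (corner_at k c p q p x \<longleftrightarrow> corner_at k c p q q y))"
proof -
  interpret rpq k c p q
    using assms by (simp add: rpq_def rp_def rpq_axioms_def)
  show ?thesis
  proof (intro conjI allI impI)
    fix x assume "breakpoint k c p q x"
    thus "corner_at k c p q p x \<noteq> corner_at k c p q q x" by (rule part1)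
  next
    fix x y \<gamma>
    assume h: "breakpoint k c p q x \<and> breakpoint k c p q y \<and> x \<noteq> y
           \<and> arc \<gamma> \<and> pathstart \<gamma> = x \<and> pathfinish \<gamma> = y
           \<and> path_image \<gamma> \<subseteq> bisector (regular_polygon k c) p q
           \<and> (\<forall>t\<in>{0<..<1}. \<not> breakpoint k c p q (\<gamma> t))"
    show "corner_at k c p q p x \<longleftrightarrow> corner_at k c p q q y"
      using h by (intro part2[of x y \<gamma>]) auto
  qed
qed

end
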